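(* Let $q$ be a power of a prime $p$ and let $h(x) = x^8 + a_1x^7 + a_2x^6 + a_3x^5 + a_4x^4 + a_3qx^3 + a_2q^2x^2 + a_1q^3x + q^4$ with $a_1,\dots,a_4 \in \mathbb{Z}$. Consider the inequalities: (a) $|a_1| \leq 8\sqrt{q}$; (b* ) $6\sqrt{q}\,|a_1| - 20q \leq a_2$; (b) $a_2 \leq \frac{3}{8}a_1^2 + 4q$; (c) $-9qa_1 - 4\sqrt{q}\,a_2 - 16q\sqrt{q} \leq a_3 \leq -9qa_1 + 4\sqrt{q}\,a_2 + 16q\sqrt{q}$; (d) $\frac12 a_1a_2 - \frac18 a_1^3 + qa_1 - \frac{1}{216}(9a_1^2 - 24a_2 + 96q)^{3/2} \leq a_3 \leq \frac12 a_1a_2 - \frac18 a_1^3 + qa_1 + \frac{1}{216}(9a_1^2 - 24a_2 + 96q)^{3/2}$; (e) $2\sqrt{q}\,|qa_1 + a_3| - 2qa_2 - 2q^2 \leq a_4$; where the quantity $9a_1^2-24a_2+96q$ in (d) is a non-negative real number by (b). Define the real numbers $u_2 = -\frac{3a_1^2}{16} + \frac{a_2}{2} - 2q$, $u_3 = -\frac{a_1^3}{32} + \frac{a_1a_2}{8} + \frac{a_1q}{4} - \frac{a_3}{4}$, $\Delta = u_3^2 + \frac{4u_2^3}{27}$, and the set $S = \left\{ -\zeta^k\omega\left(\frac{9u_3}{2} + \frac{3\sqrt{\Delta}}{2}\right) - \zeta^{-k}\bar\omega\left(\frac{9u_3}{2} - \frac{3\sqrt{\Delta}}{2}\right) + \frac{2u_2^2}{3}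 : 0 \leq k \leq 2\right\}$, where $\zeta$ is a primitive third root of unity, $\sqrt{\Delta}$ is a complex square root of $\Delta$, and $\omega$ is a complex third root of $\frac12(-u_3 + \sqrt{\Delta})$. If $h(x) \in W_q(4)$ or (a)–(d) hold, then $S$ consists of real numbers. Assuming this, sort the elements of $S$ as $\theta_1 \leq \theta_2 \leq \theta_3$ and consider (f) $\frac{3}{256}a_1^4 - \frac{1}{16}a_1^2a_2 - \frac12 qa_1^2 + \frac14 a_1a_3 + 2qa_2 - 2q^2 + \theta_1 \leq a_4 \leq \frac{3}{256}a_1^4 - \frac{1}{16}a_1^2a_2 - \frac12 qa_1^2 + \frac14 a_1a_3 + 2qa_2 - 2q^2 + \theta_2$. Then $h(x) \in W_q(4)$ if and only if (a)–(f) all hold. Moreover, $h(x) \in W_q(4)$ has a real root if and only if at least one of the inequalities in (a), (b* ), (c) or (e) is an equality. Explicitly, $h(x)$ lies in $W_q(4)$ and has a real root if and only if exactly one of the following (mutually exclusive) cases occurs: (I) $q$ is a square and $h(x) = (x+\sqrt{q})^2h_0(x)$ or $h(x) = (x-\sqrt{q})^2h_0(x)$ with $h_0(x) \in W_q(3)$; (II) $q$ is not a square and $h(x) = (x^2-q)^2h_0(x)$ with $h_0(x) \in W_q(2)$.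
   Context: A $q$-Weil polynomial is a monic polynomial in $\mathbb{Z}[x]$ of even positive degree $2g$ whose set of complex roots has the form $\{w_1,\bar w_1,\ldots,w_g,\bar w_g\}$ with $|w_i| = \sqrt{q}$ for every $i$. $W_q(g)$ denotes the set of $q$-Weil polynomials of degree $2g$. For a positive real $r$, $r^{1/n}$ and $\sqrt[n]{r}$ denote the positive real $n$-th root; in all other cases these symbols denote an arbitrary complex $n$-th root. *)

theory Defs
  imports "HOL-Analysis.Analysis" "HOL-Computational_Algebra.Polynomial"
begin

definition weil_poly :: "nat \<Rightarrow> nat \<Rightarrow> int poly \<Rightarrow> bool" where
  "weil_poly q g h \<longleftrightarrow> g > 0 \<and> degree h = 2 * g \<and> lead_coeff h = 1 \<and>
     (\<exists>ws :: complex list. length ws = g \<and> (\<forall>w\<in>set ws. cmod w = sqrt (real q)) \<and>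
        map_poly of_int h = (\<Prod>w\<leftarrow>ws. [:- w, 1:] * [:- cnj w, 1:]))"

definition W :: "nat \<Rightarrow> nat \<Rightarrow> int poly set" where
  "W q g = {h. weil_poly q g h}"

definition hpoly :: "nat \<Rightarrow> int \<Rightarrow> int \<Rightarrow> int \<Rightarrow> int \<Rightarrow> int poly" where
  "hpoly q a1 a2 a3 a4 =
     [: int q ^ 4, a1 * int q ^ 3, a2 * int q ^ 2, a3 * int q, a4, a3, a2, a1, 1 :]"

definition cond_a :: "nat \<Rightarrow> int \<Rightarrow> bool" where
  "cond_a q a1 \<longleftrightarrow> \<bar>real_of_int a1\<bar> \<le> 8 * sqrt q"

definition cond_bstar :: "nat \<Rightarrow> int \<Rightarrow> int \<Rightarrow> bool" where
  "cond_bstar q a1 a2 \<longleftrightarrow> 6 * sqrt q * \<bar>real_of_int a1\<bar> - 20 * real q \<le> real_of_int a2"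

definition cond_b :: "nat \<Rightarrow> int \<Rightarrow> int \<Rightarrow> bool" where
  "cond_b q a1 a2 \<longleftrightarrow> real_of_int a2 \<le> 3/8 * real_of_int a1 ^ 2 + 4 * real q"

definition cond_c :: "nat \<Rightarrow> int \<Rightarrow> int \<Rightarrow> int \<Rightarrow> bool" where
  "cond_c q a1 a2 a3 \<longleftrightarrow>
     - 9 * real q * a1 - 4 * sqrt q * a2 - 16 * real q * sqrt q \<le> real_of_int a3 \<and>
     real_of_int a3 \<le> - 9 * real q * a1 + 4 * sqrt q * a2 + 16 * real q * sqrt q"

definition cond_d :: "nat \<Rightarrow> int \<Rightarrow> int \<Rightarrow> int \<Rightarrow> bool" where
  "cond_d q a1 a2 a3 \<longleftrightarrow>
    (let m = 1/2 * real_of_int a1 * a2 - 1/8 * real_of_int a1 ^ 3 + real q * a1;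
         r = 1/216 * (9 * real_of_int a1 ^ 2 - 24 * a2 + 96 * real q) powr (3/2)
     in m - r \<le> real_of_int a3 \<and> real_of_int a3 \<le> m + r)"

definition cond_e :: "nat \<Rightarrow> int \<Rightarrow> int \<Rightarrow> int \<Rightarrow> int \<Rightarrow> bool" where
  "cond_e q a1 a2 a3 a4 \<longleftrightarrow>
     2 * sqrt q * \<bar>real q * a1 + a3\<bar> - 2 * real q * a2 - 2 * real q ^ 2 \<le> real_of_int a4"

definition u2 :: "nat \<Rightarrow> int \<Rightarrow> int \<Rightarrow> real" where
  "u2 q a1 a2 = - 3 * real_of_int a1 ^ 2 / 16 + real_of_int a2 / 2 - 2 * real q"

definition u3 :: "nat \<Rightarrow> int \<Rightarrow> int \<Rightarrow> int \<Rightarrow> real" where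
  "u3 q a1 a2 a3 = - (real_of_int a1 ^ 3) / 32 + real_of_int a1 * real_of_int a2 / 8
                    + real_of_int a1 * real q / 4 - real_of_int a3 / 4"

definition Disc :: "nat \<Rightarrow> int \<Rightarrow> int \<Rightarrow> int \<Rightarrow> real" where
  "Disc q a1 a2 a3 = u3 q a1 a2 a3 ^ 2 + 4 * u2 q a1 a2 ^ 3 / 27"

definition admissible :: "nat \<Rightarrow> int \<Rightarrow> int \<Rightarrow> int \<Rightarrow> complex \<Rightarrow> complex \<Rightarrow> complex \<Rightarrow> bool" where
  "admissible q a1 a2 a3 \<zeta> sD om \<longleftrightarrow>
     \<zeta> ^ 3 = 1 \<and> \<zeta> \<noteq> 1 \<and> sD ^ 2 = complex_of_real (Disc q a1 a2 a3) \<and>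
     om ^ 3 = (- complex_of_real (u3 q a1 a2 a3) + sD) / 2"

definition S_elem :: "nat \<Rightarrow> int \<Rightarrow> int \<Rightarrow> int \<Rightarrow> complex \<Rightarrow> complex \<Rightarrow> complex \<Rightarrow> nat \<Rightarrow> complex" where
  "S_elem q a1 a2 a3 \<zeta> sD om k =
     (let U2 = complex_of_real (u2 q a1 a2); U3 = complex_of_real (u3 q a1 a2 a3) in
      - (\<zeta> ^ k) * om * (9 * U3 / 2 + 3 * sD / 2)
      - (inverse \<zeta>) ^ k * cnj om * (9 * U3 / 2 - 3 * sD / 2) + 2 * U2 ^ 2 / 3)"

text \<open>Sorted real values theta_1 <= theta_2 <= theta_3 (as a list, index 0,1,2).\<close>
definition thetas :: "nat \<Rightarrow> int \<Rightarrow> int \<Rightarrow> int \<Rightarrow> complex \<Rightarrow> complex \<Rightarrow> complex \<Rightarrow> real list" where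
  "thetas q a1 a2 a3 \<zeta> sD om = sort (map (\<lambda>k. Re (S_elem q a1 a2 a3 \<zeta> sD om k)) [0, 1, 2])"

definition cond_f :: "nat \<Rightarrow> int \<Rightarrow> int \<Rightarrow> int \<Rightarrow> int \<Rightarrow> complex \<Rightarrow> complex \<Rightarrow> complex \<Rightarrow> bool" where
  "cond_f q a1 a2 a3 a4 \<zeta> sD om \<longleftrightarrow>
    (let c = 3/256 * real_of_int a1 ^ 4 - 1/16 * real_of_int a1 ^ 2 * a2 - 1/2 * real q * a1 ^ 2
             + 1/4 * real_of_int a1 * a3 + 2 * real q * a2 - 2 * real q ^ 2;
         th = thetas q a1 a2 a3 \<zeta> sD om
     in c + th ! 0 \<le> real_of_int a4 \<and> real_of_int a4 \<le> c + th ! 1)"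

end

theory Submission
  imports Defs
begin

lemma sort3:
  fixes x0 x1 x2 A :: real
  shows "(sort [x0, x1, x2] ! 0 \<le> A \<longleftrightarrow> x0 \<le> A \<or> x1 \<le> A \<or> x2 \<le> A) \<and>
         (A \<le> sort [x0, x1, x2] ! 1 \<longleftrightarrow> (A \<le> x0 \<and> A \<le> x1) \<or> (A \<le> x0 \<and> A \<le> x2) \<or> (A \<le> x1 \<and> A \<le> x2))"
  by (auto simp: insort_is_Cons split: if_splits)

lemma cardano_core1:
  fixes z w dd U2 U3 :: complex
  assumes "z^3 = (-U3 + dd)/2" "w^3 = (-U3 - dd)/2" "z * w = -U2/3"
  shows "(-(z+w))^3 + U2 * (-(z+w)) - U3 = 0"
  using assms by algebra

lemma cardano_core2:
  fixes z w dd U2 U3 :: complex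
  assumes "z^3 = (-U3 + dd)/2" "w^3 = (-U3 - dd)/2" "z * w = -U2/3"
  shows "- z * (9 * U3 / 2 + 3 * dd / 2) - w * (9 * U3 / 2 - 3 * dd / 2) + 2 * U2 ^ 2 / 3
     = -((-(z+w))^4 + 2 * U2 * (-(z+w))^2 - 4 * U3 * (-(z+w)))"
  using assms by algebra

lemma cardano_vieta:
  fixes x x' v v' dd U2 U3 :: complex
  assumes "x^2 + x + 1 = 0" "x * x' = 1" "v^3 = (-U3 + dd)/2" "v'^3 = (-U3 - dd)/2" "v * v' = -U2/3"
  shows "(-(v+v')) + (-(x * v+x' * v')) + (-(x^2 * v+x'^2 * v')) = 0"
   "(-(v+v')) * (-(x * v+x' * v')) + (-(v+v')) * (-(x^2 * v+x'^2 * v')) + (-(x * v+x' * v')) * (-(x^2 * v+x'^2 * v')) = U2"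
   "(-(v+v')) * (-(x * v+x' * v')) * (-(x^2 * v+x'^2 * v')) = U3"
  using assms by algebra+

lemma zeta_facts:
  fixes \<zeta> :: complex
  assumes "\<zeta> ^ 3 = 1" "\<zeta> \<noteq> 1"
  shows "\<zeta>^2 + \<zeta> + 1 = 0" "inverse \<zeta> = cnj \<zeta>" "\<zeta> * cnj \<zeta> = 1"
proof -
  have "(\<zeta> - 1) * (\<zeta>^2 + \<zeta> + 1) = 0" using assms(1) by algebra
  thus "\<zeta>^2 + \<zeta> + 1 = 0" using assms(2) by simp
  have "norm \<zeta> ^ 3 = 1" using assms(1) by (metis norm_one norm_power)
  hence n1: "norm \<zeta> = 1" using power_eq_iff_eq_base[of 3 "norm \<zeta>" 1] by simp
  have "\<zeta> * cnj \<zeta> = complex_of_real (norm \<zeta> ^ 2)" using complex_norm_square[of \<zeta>] by simp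
  thus z1: "\<zeta> * cnj \<zeta> = 1" using n1 by simp
  show "inverse \<zeta> = cnj \<zeta>" using z1 by (simp add: inverse_unique)
qed

lemma sqrt_neg_imag:
  fixes sD :: complex and D :: real
  assumes "sD ^ 2 = complex_of_real D" "D \<le> 0"
  shows "cnj sD = - sD" "norm sD ^ 2 = - D"
proof -
  have e1: "Re sD ^ 2 - Im sD ^ 2 = D" "2 * Re sD * Im sD = 0"
    using assms(1) by (auto simp: power2_eq_square complex_eq_iff)
  have "Re sD = 0"
  proof (rule ccontr)
    assume "Re sD \<noteq> 0"
    hence "Im sD = 0" using e1(2) by simp
    hence "Re sD ^ 2 = D" using e1(1) by simp
    moreover have "Re sD ^ 2 > 0" using \<open>Re sD \<noteq> 0\<close> by simp
    ultimately show False using assms(2) by simp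
  qed
  thus "cnj sD = - sD" by (simp add: complex_eq_iff)
  have "norm sD ^ 2 = Re sD ^ 2 + Im sD ^ 2" by (simp add: cmod_power2)
  thus "norm sD ^ 2 = - D" using e1(1) \<open>Re sD = 0\<close> by simp
qed

lemma om_norm:
  fixes om sD :: complex and U2 U3 :: real
  assumes "sD ^ 2 = complex_of_real (U3^2 + 4 * U2^3 / 27)" "U3^2 + 4 * U2^3 / 27 \<le> 0"
    and "om ^ 3 = (- complex_of_real U3 + sD) / 2"
  shows "om * cnj om = complex_of_real (- U2 / 3)" "cnj om ^ 3 = (- complex_of_real U3 - sD) / 2"
proof -
  note sq = sqrt_neg_imag[OF assms(1,2)]
  have reS: "Re sD = 0" using sq(1) by (simp add: complex_eq_iff)
  have "norm sD ^ 2 = Im sD ^ 2" using reS by (simp add: cmod_power2)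
  hence imS: "Im sD ^ 2 = - (U3^2 + 4 * U2^3 / 27)" using sq(2) by simp
  have "norm om ^ 6 = norm (om ^ 3) ^ 2" by (simp add: norm_power flip: power_mult)
  also have "\<dots> = norm ((- complex_of_real U3 + sD) / 2) ^ 2" by (subst assms(3)) (rule refl)
  also have "\<dots> = Re ((- complex_of_real U3 + sD) / 2) ^ 2 + Im ((- complex_of_real U3 + sD) / 2) ^ 2"
    by (rule cmod_power2)
  also have "\<dots> = (U3 ^ 2 + Im sD ^ 2) / 4"
    using reS by (simp add: power2_eq_square algebra_simps)
  also have "\<dots> = (- U2 / 3) ^ 3" using imS by (simp add: power3_eq_cube algebra_simps)
  finally have "(norm om ^ 2) ^ 3 = (- U2 / 3) ^ 3" by (simp flip: power_mult)
  moreover have "0 \<le> (- U2 / 3) ^ 3" using calculation by (metis zero_le_power norm_ge_zero)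
  hence "0 \<le> - U2 / 3" by (simp add: zero_le_odd_power)
  ultimately have "norm om ^ 2 = - U2 / 3" using power_eq_iff_eq_base[of 3 "norm om ^ 2" "- U2 / 3"] by simp
  thus "om * cnj om = complex_of_real (- U2 / 3)" using complex_norm_square[of om] by simp
  have "cnj om ^ 3 = cnj (om ^ 3)" by simp
  also have "\<dots> = cnj ((- complex_of_real U3 + sD) / 2)" by (subst assms(3)) (rule refl)
  also have "\<dots> = (- complex_of_real U3 - sD) / 2" using sq(1) by simp
  finally show "cnj om ^ 3 = (- complex_of_real U3 - sD) / 2" .
qed

definition yv :: "complex \<Rightarrow> complex \<Rightarrow> nat \<Rightarrow> real" where
  "yv \<zeta> om k = - (2 * Re (\<zeta> ^ k * om))"

lemma adm_facts:
  assumes D: "Disc q a1 a2 a3 \<le> 0" and adm: "admissible q a1 a2 a3 \<zeta> sD om"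
  shows "om * cnj om = complex_of_real (- u2 q a1 a2 / 3)"
    "cnj om ^ 3 = (- complex_of_real (u3 q a1 a2 a3) - sD) / 2"
    "om ^ 3 = (- complex_of_real (u3 q a1 a2 a3) + sD) / 2"
    "\<zeta>^2 + \<zeta> + 1 = 0" "inverse \<zeta> = cnj \<zeta>" "\<zeta> * cnj \<zeta> = 1" "\<zeta> ^ 3 = 1"
proof -
  have a: "\<zeta> ^ 3 = 1" "\<zeta> \<noteq> 1" "sD ^ 2 = complex_of_real (Disc q a1 a2 a3)"
     "om ^ 3 = (- complex_of_real (u3 q a1 a2 a3) + sD) / 2" using adm by (auto simp: admissible_def)
  show "om ^ 3 = (- complex_of_real (u3 q a1 a2 a3) + sD) / 2" "\<zeta> ^ 3 = 1" using a by auto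
  show "\<zeta>^2 + \<zeta> + 1 = 0" "inverse \<zeta> = cnj \<zeta>" "\<zeta> * cnj \<zeta> = 1" using zeta_facts[OF a(1,2)] by auto
  have "sD ^ 2 = complex_of_real (u3 q a1 a2 a3 ^ 2 + 4 * u2 q a1 a2 ^ 3 / 27)"
    "u3 q a1 a2 a3 ^ 2 + 4 * u2 q a1 a2 ^ 3 / 27 \<le> 0" using a(3) D by (auto simp: Disc_def)
  from om_norm[OF this a(4)]
  show "om * cnj om = complex_of_real (- u2 q a1 a2 / 3)"
    "cnj om ^ 3 = (- complex_of_real (u3 q a1 a2 a3) - sD) / 2" by auto
qed

lemma S_identify:
  assumes D: "Disc q a1 a2 a3 \<le> 0" and adm: "admissible q a1 a2 a3 \<zeta> sD om"
  shows "S_elem q a1 a2 a3 \<zeta> sD om k = complex_of_real (-(yv \<zeta> om k ^ 4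
           + 2 * u2 q a1 a2 * yv \<zeta> om k ^ 2 - 4 * u3 q a1 a2 a3 * yv \<zeta> om k))"
proof -
  note f = adm_facts[OF D adm]
  define z where "z = \<zeta> ^ k * om"
  define w where "w = inverse \<zeta> ^ k * cnj om"
  have wz: "w = cnj z" unfolding w_def z_def f(5) by simp
  have z3: "z ^ 3 = (- complex_of_real (u3 q a1 a2 a3) + sD) / 2"
  proof -
    have "z ^ 3 = (\<zeta> ^ 3) ^ k * om ^ 3" unfolding z_def
      by (simp add: power_mult_distrib flip: power_mult) (simp add: mult.commute)
    thus ?thesis using f(3,7) by simp
  qed
  have w3: "w ^ 3 = (- complex_of_real (u3 q a1 a2 a3) - sD) / 2"
  proof -
    have "w ^ 3 = (cnj \<zeta> ^ 3) ^ k * cnj om ^ 3" unfolding w_def f(5)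
      by (simp add: power_mult_distrib flip: power_mult) (simp add: mult.commute)
    also have "cnj \<zeta> ^ 3 = 1" using f(7) by (metis complex_cnj_one complex_cnj_power)
    finally show ?thesis using f(2) by simp
  qed
  have zw: "z * w = - complex_of_real (u2 q a1 a2) / 3"
  proof -
    have "z * w = (\<zeta> * cnj \<zeta>) ^ k * (om * cnj om)" unfolding z_def w_def f(5)
      by (simp add: power_mult_distrib algebra_simps)
    thus ?thesis using f(1,6) by simp
  qed
  have y: "- (z + w) = complex_of_real (yv \<zeta> om k)"
  proof -
    have "- (z + w) = - complex_of_real (2 * Re z)" using wz complex_add_cnj[of z] by (simp only:)
    also have "\<dots> = complex_of_real (yv \<zeta> om k)" by (simp only: yv_def z_def of_real_minus)
    finally show ?thesis .
  qed
  have "S_elem q a1 a2 a3 \<zeta> sD om k = - z * (9 * complex_of_real (u3 q a1 a2 a3) / 2 + 3 * sD / 2)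
      - w * (9 * complex_of_real (u3 q a1 a2 a3) / 2 - 3 * sD / 2) + 2 * complex_of_real (u2 q a1 a2) ^ 2 / 3"
    unfolding S_elem_def Let_def z_def w_def by simp
  also have "\<dots> = -((-(z+w))^4 + 2 * complex_of_real (u2 q a1 a2) * (-(z+w))^2
       - 4 * complex_of_real (u3 q a1 a2 a3) * (-(z+w)))"
    by (rule cardano_core2[OF z3 w3 zw])
  also have "\<dots> = complex_of_real (-(yv \<zeta> om k ^ 4
           + 2 * u2 q a1 a2 * yv \<zeta> om k ^ 2 - 4 * u3 q a1 a2 a3 * yv \<zeta> om k))"
    unfolding y by simp
  finally show ?thesis .
qed

lemma yv_vieta:
  assumes D: "Disc q a1 a2 a3 \<le> 0" and adm: "admissible q a1 a2 a3 \<zeta> sD om"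
  shows "yv \<zeta> om 0 + yv \<zeta> om 1 + yv \<zeta> om 2 = 0"
    "yv \<zeta> om 0 * yv \<zeta> om 1 + yv \<zeta> om 0 * yv \<zeta> om 2 + yv \<zeta> om 1 * yv \<zeta> om 2 = u2 q a1 a2"
    "yv \<zeta> om 0 * yv \<zeta> om 1 * yv \<zeta> om 2 = u3 q a1 a2 a3"
proof -
  note f = adm_facts[OF D adm]
  have x: "\<zeta> * cnj \<zeta> = 1" by (rule f(6))
  have v: "om * cnj om = - complex_of_real (u2 q a1 a2) / 3" using f(1) by simp
  have yk: "complex_of_real (yv \<zeta> om k) = - (\<zeta> ^ k * om + cnj \<zeta> ^ k * cnj om)" for k
  proof -
    have "\<zeta> ^ k * om + cnj \<zeta> ^ k * cnj om = complex_of_real (2 * Re (\<zeta> ^ k * om))"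
      using complex_add_cnj[of "\<zeta> ^ k * om"] by (simp only: complex_cnj_power complex_cnj_mult)
    thus ?thesis by (simp only: yv_def of_real_minus)
  qed
  have y0: "complex_of_real (yv \<zeta> om 0) = -(om + cnj om)" using yk[of 0] by simp
  have y1: "complex_of_real (yv \<zeta> om 1) = -(\<zeta> * om + cnj \<zeta> * cnj om)" using yk[of 1] by simp
  have y2: "complex_of_real (yv \<zeta> om 2) = -(\<zeta>^2 * om + cnj \<zeta>^2 * cnj om)" using yk[of 2] by simp
  note V = cardano_vieta[OF f(4) x f(3) f(2) v]
  have "complex_of_real (yv \<zeta> om 0 + yv \<zeta> om 1 + yv \<zeta> om 2) = 0"
    unfolding of_real_add y0 y1 y2 by (rule V(1))
  thus "yv \<zeta> om 0 + yv \<zeta> om 1 + yv \<zeta> om 2 = 0" by (simp only: of_real_eq_0_iff)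
  have "complex_of_real (yv \<zeta> om 0 * yv \<zeta> om 1 + yv \<zeta> om 0 * yv \<zeta> om 2 + yv \<zeta> om 1 * yv \<zeta> om 2) = complex_of_real (u2 q a1 a2)"
    unfolding of_real_add of_real_mult y0 y1 y2 by (rule V(2))
  thus "yv \<zeta> om 0 * yv \<zeta> om 1 + yv \<zeta> om 0 * yv \<zeta> om 2 + yv \<zeta> om 1 * yv \<zeta> om 2 = u2 q a1 a2"
    by (simp only: of_real_eq_iff)
  have "complex_of_real (yv \<zeta> om 0 * yv \<zeta> om 1 * yv \<zeta> om 2) = complex_of_real (u3 q a1 a2 a3)"
    unfolding of_real_mult y0 y1 y2 by (rule V(3))
  thus "yv \<zeta> om 0 * yv \<zeta> om 1 * yv \<zeta> om 2 = u3 q a1 a2 a3" by (simp only: of_real_eq_iff)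
qed

definition Gb :: "real \<Rightarrow> real \<Rightarrow> real \<Rightarrow> real \<Rightarrow> real \<Rightarrow> real" where
  "Gb b1 b2 b3 b4 x = x^4 + b1 * x^3 + b2 * x^2 + b3 * x + b4"
definition G1b :: "real \<Rightarrow> real \<Rightarrow> real \<Rightarrow> real \<Rightarrow> real" where
  "G1b b1 b2 b3 x = 4 * x^3 + 3 * b1 * x^2 + 2 * b2 * x + b3"
definition G2b :: "real \<Rightarrow> real \<Rightarrow> real \<Rightarrow> real" where
  "G2b b1 b2 x = 12 * x^2 + 6 * b1 * x + 2 * b2"
definition V4 :: "real \<Rightarrow> real \<Rightarrow> real \<Rightarrow> real \<Rightarrow> real \<Rightarrow> real \<Rightarrow> real \<Rightarrow> real \<Rightarrow> bool" where
  "V4 b1 b2 b3 b4 t1 t2 t3 t4 \<longleftrightarrow> b1 = -(t1+t2+t3+t4) \<and>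
     b2 = t1 * t2 + t1 * t3 + t1 * t4 + t2 * t3 + t2 * t4 + t3 * t4 \<and>
     b3 = -(t1 * t2 * t3 + t1 * t2 * t4 + t1 * t3 * t4 + t2 * t3 * t4) \<and> b4 = t1 * t2 * t3 * t4"
definition V3 :: "real \<Rightarrow> real \<Rightarrow> real \<Rightarrow> real \<Rightarrow> real \<Rightarrow> real \<Rightarrow> bool" where
  "V3 b1 b2 b3 r0 r1 r2 \<longleftrightarrow> 3 * b1 = -4 * (r0+r1+r2) \<and> b2 = 2 * (r0 * r1 + r0 * r2 + r1 * r2) \<and>
     b3 = -4 * (r0 * r1 * r2)"
definition U2b :: "real \<Rightarrow> real \<Rightarrow> real" where "U2b b1 b2 = b2/2 - 3 * b1^2/16"
definition U3b :: "real \<Rightarrow> real \<Rightarrow> real \<Rightarrow> real" where "U3b b1 b2 b3 = -(b1^3/32 - b1 * b2/8 + b3/4)"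
definition Db :: "real \<Rightarrow> real \<Rightarrow> real \<Rightarrow> real" where "Db b1 b2 b3 = U3b b1 b2 b3 ^ 2 + 4 * U2b b1 b2 ^ 3 / 27"

lemma V4_G: "V4 b1 b2 b3 b4 t1 t2 t3 t4 \<Longrightarrow> Gb b1 b2 b3 b4 x = (x-t1) * (x-t2) * (x-t3) * (x-t4)"
  unfolding V4_def Gb_def by algebra
lemma V4_G1: "V4 b1 b2 b3 b4 t1 t2 t3 t4 \<Longrightarrow> G1b b1 b2 b3 x =
   (x-t2) * (x-t3) * (x-t4) + (x-t1) * (x-t3) * (x-t4) + (x-t1) * (x-t2) * (x-t4) + (x-t1) * (x-t2) * (x-t3)"
  unfolding V4_def G1b_def by algebra
lemma V4_G2: "V4 b1 b2 b3 b4 t1 t2 t3 t4 \<Longrightarrow> G2b b1 b2 x =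
   2 * ((x-t3) * (x-t4) + (x-t2) * (x-t4) + (x-t2) * (x-t3) + (x-t1) * (x-t4) + (x-t1) * (x-t3) + (x-t1) * (x-t2))"
  unfolding V4_def G2b_def by algebra
lemma V3_G1: "V3 b1 b2 b3 r0 r1 r2 \<Longrightarrow> G1b b1 b2 b3 x = 4 * ((x-r0) * (x-r1) * (x-r2))"
  unfolding V3_def G1b_def by algebra
lemma V3_G2: "V3 b1 b2 b3 r0 r1 r2 \<Longrightarrow> G2b b1 b2 x = 4 * ((x-r1) * (x-r2) + (x-r0) * (x-r2) + (x-r0) * (x-r1))"
  unfolding V3_def G2b_def by algebra

lemma G1_shift: "G1b b1 b2 b3 (y - b1/4) = 4 * (y^3 + U2b b1 b2 * y - U3b b1 b2 b3)"
  unfolding G1b_def U2b_def U3b_def by (simp add: field_simps power2_eq_square power3_eq_cube)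
lemma G2_shift: "G2b b1 b2 (y - b1/4) = 4 * (3 * y^2 + U2b b1 b2)"
  unfolding G2b_def U2b_def by (simp add: field_simps power2_eq_square)

lemma fun_V4:
  assumes "\<forall>x. Gb b1 b2 b3 b4 x = (x-t1) * (x-t2) * (x-t3) * (x-t4)"
  shows "V4 b1 b2 b3 b4 t1 t2 t3 t4"
proof -
  have e: "Gb b1 b2 b3 b4 0 = (0-t1) * (0-t2) * (0-t3) * (0-t4)"
    "Gb b1 b2 b3 b4 1 = (1-t1) * (1-t2) * (1-t3) * (1-t4)"
    "Gb b1 b2 b3 b4 (-1) = (-1-t1) * (-1-t2) * (-1-t3) * (-1-t4)"
    "Gb b1 b2 b3 b4 2 = (2-t1) * (2-t2) * (2-t3) * (2-t4)"
    "Gb b1 b2 b3 b4 (-2) = (-2-t1) * (-2-t2) * (-2-t3) * (-2-t4)"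
    using assms by blast+
  thus ?thesis unfolding Gb_def V4_def by simp algebra
qed

lemma prod_list_mset_eq:
  fixes f :: "real \<Rightarrow> real"
  assumes "mset xs = mset ys" shows "prod_list (map f xs) = prod_list (map f ys)"
  by (metis assms mset_map prod_mset_prod_list)

lemma V4_sort:
  assumes "V4 b1 b2 b3 b4 t1 t2 t3 t4"
  shows "\<exists>s1 s2 s3 s4. s1 \<le> s2 \<and> s2 \<le> s3 \<and> s3 \<le> s4 \<and> V4 b1 b2 b3 b4 s1 s2 s3 s4 \<and>
            {s1, s2, s3, s4} = {t1, t2, t3, t4}"
proof -
  define ss where "ss = sort [t1, t2, t3, t4]"
  have "length ss = 4" unfolding ss_def by simp
  then obtain s1 s2 s3 s4 where ss: "ss = [s1, s2, s3, s4]"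
    by (auto simp: length_Suc_conv numeral_eq_Suc)
  have "sorted ss" unfolding ss_def by simp
  hence o: "s1 \<le> s2" "s2 \<le> s3" "s3 \<le> s4" unfolding ss by auto
  have m: "mset ss = mset [t1, t2, t3, t4]" unfolding ss_def by simp
  hence st: "{s1, s2, s3, s4} = {t1, t2, t3, t4}" unfolding ss by (metis list.set set_mset_mset)
  have "\<forall>x. Gb b1 b2 b3 b4 x = (x-s1) * (x-s2) * (x-s3) * (x-s4)"
  proof
    fix x
    have "prod_list (map (\<lambda>t. x - t) ss) = prod_list (map (\<lambda>t. x - t) [t1, t2, t3, t4])"
      by (rule prod_list_mset_eq[OF m])
    thus "Gb b1 b2 b3 b4 x = (x-s1) * (x-s2) * (x-s3) * (x-s4)"
      unfolding V4_G[OF assms] ss by (simp add: mult.assoc)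
  qed
  from fun_V4[OF this] o st show ?thesis by blast
qed

lemma fun_V3:
  assumes "\<forall>x. G1b b1 b2 b3 x = 4 * ((x-r0) * (x-r1) * (x-r2))"
  shows "V3 b1 b2 b3 r0 r1 r2"
proof -
  have e: "G1b b1 b2 b3 0 = 4 * ((0-r0) * (0-r1) * (0-r2))"
    "G1b b1 b2 b3 1 = 4 * ((1-r0) * (1-r1) * (1-r2))"
    "G1b b1 b2 b3 (-1) = 4 * ((-1-r0) * (-1-r1) * (-1-r2))"
    "G1b b1 b2 b3 2 = 4 * ((2-r0) * (2-r1) * (2-r2))"
    using assms by blast+
  thus ?thesis unfolding G1b_def V3_def by simp algebra
qed

lemma V3_sort:
  assumes "V3 b1 b2 b3 r0 r1 r2"
  shows "\<exists>s0 s1 s2. s0 \<le> s1 \<and> s1 \<le> s2 \<and> V3 b1 b2 b3 s0 s1 s2 \<and> mset [s0, s1, s2] = mset [r0, r1, r2]"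
proof -
  define ss where "ss = sort [r0, r1, r2]"
  have "length ss = 3" unfolding ss_def by simp
  then obtain s0 s1 s2 where ss: "ss = [s0, s1, s2]"
    by (auto simp: length_Suc_conv numeral_eq_Suc)
  have "sorted ss" unfolding ss_def by simp
  hence o: "s0 \<le> s1" "s1 \<le> s2" unfolding ss by auto
  have m: "mset ss = mset [r0, r1, r2]" unfolding ss_def by simp
  have "\<forall>x. G1b b1 b2 b3 x = 4 * ((x-s0) * (x-s1) * (x-s2))"
  proof
    fix x
    have "prod_list (map (\<lambda>t. x - t) ss) = prod_list (map (\<lambda>t. x - t) [r0, r1, r2])"
      by (rule prod_list_mset_eq[OF m])
    thus "G1b b1 b2 b3 x = 4 * ((x-s0) * (x-s1) * (x-s2))"
      unfolding V3_G1[OF assms] ss by (simp add: mult.assoc)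
  qed
  from fun_V3[OF this] o m ss show ?thesis by blast
qed

lemma G1_cont: "isCont (\<lambda>x. G1b b1 b2 b3 x) x"
  unfolding G1b_def by (intro continuous_intros)
lemma G_cont: "isCont (\<lambda>x. Gb b1 b2 b3 b4 x) x"
  unfolding Gb_def by (intro continuous_intros)

lemma cubic_fac: fixes z U2 \<rho> :: real shows
  "z^3 + U2 * z - (\<rho>^3 + U2 * \<rho>) = (z - \<rho>) * (z^2 + \<rho> * z + \<rho>^2 + U2)"
  by algebra

lemma disc_neg_sorted:
  assumes V: "V4 b1 b2 b3 b4 t1 t2 t3 t4" and o: "t1 \<le> t2" "t2 \<le> t3" "t3 \<le> t4"
  shows "Db b1 b2 b3 \<le> 0"
proof (rule ccontr)
  assume "\<not> ?thesis" hence Dp: "Db b1 b2 b3 > 0" by simp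
  define U2 where "U2 = U2b b1 b2"
  define U3 where "U3 = U3b b1 b2 b3"
  have g2: "G1b b1 b2 b3 t2 = (t2-t1) * ((t2-t3) * (t2-t4))" using V4_G1[OF V, of t2] by simp
  have g2p: "G1b b1 b2 b3 t2 \<ge> 0" unfolding g2 using o
    by (intro mult_nonneg_nonneg mult_nonpos_nonpos) auto
  have g3: "G1b b1 b2 b3 t3 = ((t3-t1) * (t3-t2)) * (t3-t4)" using V4_G1[OF V, of t3] by simp
  have g3n: "G1b b1 b2 b3 t3 \<le> 0" unfolding g3 using o
    by (intro mult_nonneg_nonpos mult_nonneg_nonneg) auto
  obtain r' where r': "t2 \<le> r'" "r' \<le> t3" "G1b b1 b2 b3 r' = 0"
    using IVT2[of "\<lambda>x. G1b b1 b2 b3 x" t3 0 t2] g2p g3n o G1_cont by auto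
  define \<rho> where "\<rho> = r' + b1/4"
  have "G1b b1 b2 b3 (\<rho> - b1/4) = 0" using r' by (simp add: \<rho>_def)
  hence "4 * (\<rho>^3 + U2 * \<rho> - U3) = 0" unfolding G1_shift U2_def U3_def .
  hence u3: "U3 = \<rho>^3 + U2 * \<rho>" by simp
  have "27 * Db b1 b2 b3 = (3 * \<rho>^2 + 4 * U2) * (3 * \<rho>^2 + U2)^2"
    unfolding Db_def U2_def[symmetric] U3_def[symmetric] u3 by algebra
  with Dp have pr: "(3 * \<rho>^2 + 4 * U2) * (3 * \<rho>^2 + U2)^2 > 0" by simp
  have f1: "3 * \<rho>^2 + 4 * U2 > 0"
  proof (rule ccontr)
    assume "\<not> ?thesis"
    hence "(3 * \<rho>^2 + 4 * U2) * (3 * \<rho>^2 + U2)^2 \<le> 0" by (intro mult_nonpos_nonneg) auto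
    with pr show False by simp
  qed
  have f2: "3 * \<rho>^2 + U2 \<noteq> 0" using pr by auto
  have f3: "3 * \<rho>^2 + U2 > 0"
  proof (cases "U2 \<le> 0")
    case True thus ?thesis using f1 by simp
  next
    case False thus ?thesis by (simp add: add_nonneg_pos)
  qed
  have Qd: "y^2 + \<rho> * y + \<rho>^2 + U2 > 0" for y
  proof -
    have "y^2 + \<rho> * y + \<rho>^2 + U2 = (y + \<rho>/2)^2 + (3 * \<rho>^2 + 4 * U2)/4"
      by (simp add: power2_eq_square field_simps)
    thus ?thesis using f1 by (simp add: add_nonneg_pos)
  qed
  have fac: "G1b b1 b2 b3 x = 4 * ((x + b1/4 - \<rho>) * ((x + b1/4)^2 + \<rho> * (x + b1/4) + \<rho>^2 + U2))" for x
  proof -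
    have "G1b b1 b2 b3 x = G1b b1 b2 b3 ((x + b1/4) - b1/4)" by simp
    also have "\<dots> = 4 * ((x + b1/4)^3 + U2 * (x + b1/4) - U3)" unfolding G1_shift U2_def U3_def ..
    also have "\<dots> = 4 * ((x + b1/4 - \<rho>) * ((x + b1/4)^2 + \<rho> * (x + b1/4) + \<rho>^2 + U2))"
      unfolding u3 using cubic_fac[of "x + b1/4" U2 \<rho>] by simp
    finally show ?thesis .
  qed
  have "t2 + b1/4 - \<rho> \<ge> 0"
  proof -
    have "0 \<le> (t2 + b1/4 - \<rho>) * ((t2 + b1/4)^2 + \<rho> * (t2 + b1/4) + \<rho>^2 + U2)"
      using g2p fac[of t2] by simp
    thus ?thesis using Qd[of "t2 + b1/4"] by (simp add: zero_le_mult_iff)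
  qed
  hence t2r: "t2 = r'" using r' by (simp add: \<rho>_def)
  have "t3 + b1/4 - \<rho> \<le> 0"
  proof -
    have "(t3 + b1/4 - \<rho>) * ((t3 + b1/4)^2 + \<rho> * (t3 + b1/4) + \<rho>^2 + U2) \<le> 0"
      using g3n fac[of t3] by simp
    thus ?thesis using Qd[of "t3 + b1/4"] by (simp add: mult_le_0_iff)
  qed
  hence t3r: "t3 = r'" using r' by (simp add: \<rho>_def)
  have "G2b b1 b2 t2 = 2 * ((t2 - t1) * (t2 - t4))"
    using V4_G2[OF V, of t2] t2r t3r by simp
  also have "\<dots> \<le> 0" using o by (intro mult_nonneg_nonpos) (auto intro: mult_nonneg_nonpos)
  finally have "G2b b1 b2 t2 \<le> 0" .
  moreover have "G2b b1 b2 t2 = 4 * (3 * \<rho>^2 + U2)"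
    using G2_shift[of b1 b2 \<rho>] t2r by (simp add: \<rho>_def U2_def)
  ultimately show False using f3 by simp
qed

lemma disc_neg:
  assumes V: "V4 b1 b2 b3 b4 t1 t2 t3 t4"
  shows "Db b1 b2 b3 \<le> 0"
  using V4_sort[OF V] disc_neg_sorted by blast

lemma pos_le0: fixes a c :: real shows "a > 0 \<Longrightarrow> a * c \<le> 0 \<Longrightarrow> c \<le> 0"
  by (auto simp: mult_le_0_iff)
lemma pos_ge0: fixes a c :: real shows "a > 0 \<Longrightarrow> a * c \<ge> 0 \<Longrightarrow> c \<ge> 0"
  by (auto simp: zero_le_mult_iff)
lemma pos_le0': fixes a c :: real shows "a > 0 \<Longrightarrow> c * a \<le> 0 \<Longrightarrow> c \<le> 0"
  by (auto simp: mult_le_0_iff)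
lemma pos_ge0': fixes a c :: real shows "a > 0 \<Longrightarrow> c * a \<ge> 0 \<Longrightarrow> c \<ge> 0"
  by (auto simp: zero_le_mult_iff)

lemma G1_left_neg:
  assumes V: "V4 b1 b2 b3 b4 t1 t2 t3 t4" and o: "t1 \<le> t2" "t2 \<le> t3" "t3 \<le> t4" and x: "x < t1"
  shows "G1b b1 b2 b3 x < 0"
proof -
  have p: "t1 - x > 0" "t2 - x > 0" "t3 - x > 0" "t4 - x > 0" using o x by auto
  have "G1b b1 b2 b3 x = - ((t2-x) * (t3-x) * (t4-x) + (t1-x) * (t3-x) * (t4-x) + (t1-x) * (t2-x) * (t4-x) + (t1-x) * (t2-x) * (t3-x))"
    unfolding V4_G1[OF V] by algebra
  moreover have "(t2-x) * (t3-x) * (t4-x) + (t1-x) * (t3-x) * (t4-x) + (t1-x) * (t2-x) * (t4-x) + (t1-x) * (t2-x) * (t3-x) > 0"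
    using p by (intro add_pos_pos mult_pos_pos) auto
  ultimately show ?thesis by simp
qed

lemma G1_right_pos:
  assumes V: "V4 b1 b2 b3 b4 t1 t2 t3 t4" and o: "t1 \<le> t2" "t2 \<le> t3" "t3 \<le> t4" and x: "x > t4"
  shows "G1b b1 b2 b3 x > 0"
proof -
  have p: "x - t1 > 0" "x - t2 > 0" "x - t3 > 0" "x - t4 > 0" using o x by auto
  show ?thesis unfolding V4_G1[OF V]
    using p by (intro add_pos_pos mult_pos_pos) auto
qed

lemma crit_signs_sorted:
  assumes V: "V4 b1 b2 b3 b4 t1 t2 t3 t4" and o: "t1 \<le> t2" "t2 \<le> t3" "t3 \<le> t4"
    and W: "V3 b1 b2 b3 r0 r1 r2" and p: "r0 \<le> r1" "r1 \<le> r2"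
  shows "Gb b1 b2 b3 b4 r0 \<le> 0 \<and> Gb b1 b2 b3 b4 r1 \<ge> 0 \<and> Gb b1 b2 b3 b4 r2 \<le> 0"
proof -
  note h1 = V3_G1[OF W] and h2 = V4_G1[OF V]
  have g1: "G1b b1 b2 b3 t1 \<le> 0"
  proof -
    have "G1b b1 b2 b3 t1 = (t1-t2) * ((t1-t3) * (t1-t4))" unfolding h2 by simp
    also have "\<dots> \<le> 0" using o by (intro mult_nonpos_nonneg mult_nonpos_nonpos) auto
    finally show ?thesis .
  qed
  have g2: "G1b b1 b2 b3 t2 \<ge> 0"
  proof -
    have "G1b b1 b2 b3 t2 = (t2-t1) * ((t2-t3) * (t2-t4))" unfolding h2 by simp
    also have "\<dots> \<ge> 0" using o by (intro mult_nonneg_nonneg mult_nonpos_nonpos) auto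
    finally show ?thesis .
  qed
  have g3: "G1b b1 b2 b3 t3 \<le> 0"
  proof -
    have "G1b b1 b2 b3 t3 = ((t3-t1) * (t3-t2)) * (t3-t4)" unfolding h2 by simp
    also have "\<dots> \<le> 0" using o by (intro mult_nonneg_nonpos mult_nonneg_nonneg) auto
    finally show ?thesis .
  qed
  have z: "G1b b1 b2 b3 r0 = 0" "G1b b1 b2 b3 r1 = 0" "G1b b1 b2 b3 r2 = 0" unfolding h1 by simp_all
  have i1: "t1 \<le> r0"
  proof (rule ccontr)
    assume "\<not> ?thesis" hence "r0 < t1" by simp
    from G1_left_neg[OF V o this] z show False by simp
  qed
  have i2: "r2 \<le> t4"
  proof (rule ccontr)
    assume "\<not> ?thesis" hence "r2 > t4" by simp
    from G1_right_pos[OF V o this] z show False by simp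
  qed
  have i3: "r0 \<le> t2"
  proof (rule ccontr)
    assume "\<not> ?thesis" hence a: "t2 < r0" by simp
    have "G1b b1 b2 b3 t2 = - (4 * ((r0 - t2) * (r1 - t2) * (r2 - t2)))" unfolding h1 by algebra
    moreover have "(r0 - t2) * (r1 - t2) * (r2 - t2) > 0" using a p by (intro mult_pos_pos) auto
    ultimately show False using g2 by simp
  qed
  have i4: "t3 \<le> r2"
  proof (rule ccontr)
    assume "\<not> ?thesis" hence a: "r2 < t3" by simp
    have "(t3 - r0) * (t3 - r1) * (t3 - r2) > 0" using a p by (intro mult_pos_pos) auto
    thus False using g3 unfolding h1 by simp
  qed
  have i5: "t2 \<le> r1"
  proof (rule ccontr)
    assume "\<not> ?thesis" hence a: "r1 < t2" by simp
    have pp: "(t3 - r0) * (t3 - r1) > 0" "(t2 - r0) * (t2 - r1) > 0" using a p o by (intro mult_pos_pos; simp)+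
    have "((t3 - r0) * (t3 - r1)) * (t3 - r2) \<le> 0" using g3 unfolding h1 by (simp add: mult.assoc)
    hence "t3 - r2 \<le> 0" using pp(1) by (rule pos_le0[rotated])
    moreover have "((t2 - r0) * (t2 - r1)) * (t2 - r2) \<ge> 0" using g2 unfolding h1 by (simp add: mult.assoc)
    hence "t2 - r2 \<ge> 0" using pp(2) by (rule pos_ge0[rotated])
    ultimately have e: "t2 = r2" "t3 = r2" using o by auto
    have "G2b b1 b2 t2 = 4 * ((t2 - r0) * (t2 - r1))" unfolding V3_G2[OF W] e by simp
    hence "G2b b1 b2 t2 > 0" using pp(2) e by simp
    moreover have "G2b b1 b2 t2 = 2 * ((t2 - t1) * (t2 - t4))" unfolding V4_G2[OF V] using e by simp
    moreover have "(t2 - t1) * (t2 - t4) \<le> 0" using o by (intro mult_nonneg_nonpos) auto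
    ultimately show False by simp
  qed
  have i6: "r1 \<le> t3"
  proof (rule ccontr)
    assume "\<not> ?thesis" hence a: "t3 < r1" by simp
    have pp: "(t3 - r1) * (t3 - r2) > 0" "(t2 - r1) * (t2 - r2) > 0" using a p o by (intro mult_neg_neg; simp)+
    have "(t3 - r0) * ((t3 - r1) * (t3 - r2)) \<le> 0" using g3 unfolding h1 by (simp add: mult.assoc)
    hence "t3 - r0 \<le> 0" using pp(1) by (rule pos_le0'[rotated])
    moreover have "(t2 - r0) * ((t2 - r1) * (t2 - r2)) \<ge> 0" using g2 unfolding h1 by (simp add: mult.assoc)
    hence "t2 - r0 \<ge> 0" using pp(2) by (rule pos_ge0'[rotated])
    ultimately have e: "t2 = r0" "t3 = r0" using o by auto
    have "G2b b1 b2 t2 = 4 * ((t2 - r1) * (t2 - r2))" unfolding V3_G2[OF W] e by simp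
    hence "G2b b1 b2 t2 > 0" using pp(2) e by simp
    moreover have "G2b b1 b2 t2 = 2 * ((t2 - t1) * (t2 - t4))" unfolding V4_G2[OF V] using e by simp
    moreover have "(t2 - t1) * (t2 - t4) \<le> 0" using o by (intro mult_nonneg_nonpos) auto
    ultimately show False by simp
  qed
  have s0: "Gb b1 b2 b3 b4 r0 \<le> 0"
  proof -
    have "Gb b1 b2 b3 b4 r0 = ((r0-t1) * ((r0-t2) * (r0-t3))) * (r0-t4)" unfolding V4_G[OF V] by (simp add: mult.assoc)
    also have "\<dots> \<le> 0" using i1 i3 o p i4 i2 i5 i6 by (intro mult_nonneg_nonpos mult_nonneg_nonneg mult_nonpos_nonpos) auto
    finally show ?thesis .
  qed
  have s1: "Gb b1 b2 b3 b4 r1 \<ge> 0"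
  proof -
    have "Gb b1 b2 b3 b4 r1 = ((r1-t1) * (r1-t2)) * ((r1-t3) * (r1-t4))" unfolding V4_G[OF V] by (simp add: mult.assoc)
    also have "\<dots> \<ge> 0" using i1 i3 o p i4 i2 i5 i6 by (intro mult_nonneg_nonneg mult_nonpos_nonpos) auto
    finally show ?thesis .
  qed
  have s2: "Gb b1 b2 b3 b4 r2 \<le> 0"
  proof -
    have "Gb b1 b2 b3 b4 r2 = ((r2-t1) * (r2-t2) * (r2-t3)) * (r2-t4)" unfolding V4_G[OF V] by (simp add: mult.assoc)
    also have "\<dots> \<le> 0" using i1 i3 o p i4 i2 i5 i6 by (intro mult_nonneg_nonpos mult_nonneg_nonneg) auto
    finally show ?thesis .
  qed
  show ?thesis using s0 s1 s2 by simp
qed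

lemma quad_split:
  fixes \<beta> \<gamma> u :: real
  assumes "u^2 + \<beta> * u + \<gamma> \<le> 0"
  shows "\<exists>p1 p2. \<forall>x. x^2 + \<beta> * x + \<gamma> = (x - p1) * (x - p2)"
proof -
  have dpos: "\<beta>^2 - 4 * \<gamma> \<ge> 0"
  proof -
    define A where "A = (2 * u + \<beta>)^2"
    define B where "B = u^2 + \<beta> * u + \<gamma>"
    have "\<beta>^2 - 4 * \<gamma> = A - 4 * B" unfolding A_def B_def by algebra
    moreover have "A \<ge> 0" unfolding A_def by simp
    moreover have "B \<le> 0" unfolding B_def using assms .
    ultimately show ?thesis by linarith
  qed
  define sq where "sq = sqrt (\<beta>^2 - 4 * \<gamma>)"
  have sq2: "sq^2 = \<beta>^2 - 4 * \<gamma>" unfolding sq_def using dpos by simp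
  have "\<forall>x. x^2 + \<beta> * x + \<gamma> = (x - (-\<beta> + sq)/2) * (x - (-\<beta> - sq)/2)"
  proof
    fix x
    have "(x - (-\<beta> + sq)/2) * (x - (-\<beta> - sq)/2) = x^2 + \<beta> * x + (\<beta>^2 - sq^2)/4"
      by (simp add: field_simps power2_eq_square)
    thus "x^2 + \<beta> * x + \<gamma> = (x - (-\<beta> + sq)/2) * (x - (-\<beta> - sq)/2)" using sq2 by simp
  qed
  thus ?thesis by blast
qed

lemma coeff_eq4:
  assumes "\<forall>x. Gb b1 b2 b3 b4 x = Gb c1 c2 c3 c4 x"
  shows "b1 = c1 \<and> b2 = c2 \<and> b3 = c3 \<and> b4 = c4"
proof -
  have "Gb b1 b2 b3 b4 0 = Gb c1 c2 c3 c4 0" "Gb b1 b2 b3 b4 1 = Gb c1 c2 c3 c4 1"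
    "Gb b1 b2 b3 b4 (-1) = Gb c1 c2 c3 c4 (-1)" "Gb b1 b2 b3 b4 2 = Gb c1 c2 c3 c4 2"
    using assms by blast+
  thus ?thesis unfolding Gb_def by simp
qed

lemma G_shift_r0:
  assumes W: "V3 b1 b2 b3 r0 r1 r2"
  shows "Gb b1 b2 b3 b4 (r0 + x) = x^4 - 4/3 * ((r1 - r0) + (r2 - r0)) * x^3 + 2 * (r1 - r0) * (r2 - r0) * x^2
           + Gb b1 b2 b3 b4 r0"
proof -
  have b: "b1 = -4/3 * (r0+r1+r2)" "b2 = 2 * (r0 * r1 + r0 * r2 + r1 * r2)" "b3 = -4 * (r0 * r1 * r2)"
    using W unfolding V3_def by linarith+
  show ?thesis unfolding Gb_def b by algebra
qed

lemma hyper_sorted: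
  assumes W: "V3 b1 b2 b3 r0 r1 r2" and p: "r0 \<le> r1" "r1 \<le> r2"
    and s: "Gb b1 b2 b3 b4 r0 \<le> 0" "Gb b1 b2 b3 b4 r1 \<ge> 0" "Gb b1 b2 b3 b4 r2 \<le> 0"
  shows "\<exists>t1 t2 t3 t4. V4 b1 b2 b3 b4 t1 t2 t3 t4"
proof (cases "Gb b1 b2 b3 b4 r0 = 0")
  case True
  define d1 where "d1 = r1 - r0"
  define d2 where "d2 = r2 - r0"
  have sh: "Gb b1 b2 b3 b4 (r0 + x) = x^2 * (x^2 - 4/3 * (d1 + d2) * x + 2 * d1 * d2)" for x
    using G_shift_r0[OF W, of b4 x] True unfolding d1_def d2_def by (simp add: algebra_simps power2_eq_square power3_eq_cube power4_eq_xxxx)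
  have "\<exists>u. u^2 + (- 4/3 * (d1 + d2)) * u + 2 * d1 * d2 \<le> 0"
  proof (cases "d2 = 0")
    case True
    hence "d1 = 0" using p unfolding d1_def d2_def by simp
    thus ?thesis using True by (intro exI[of _ 0]) simp
  next
    case False
    hence d2p: "d2^2 > 0" by simp
    have "d2^2 * (d2^2 + (- 4/3 * (d1 + d2)) * d2 + 2 * d1 * d2) \<le> 0"
      using sh[of d2] s(3) unfolding d2_def by simp
    hence "d2^2 + (- 4/3 * (d1 + d2)) * d2 + 2 * d1 * d2 \<le> 0" using pos_le0[OF d2p] by blast
    thus ?thesis by blast
  qed
  then obtain u where "u^2 + (- 4/3 * (d1 + d2)) * u + 2 * d1 * d2 \<le> 0" by blast
  from quad_split[OF this] obtain p1 p2 where pq: "\<forall>x. x^2 + (- 4/3 * (d1 + d2)) * x + 2 * d1 * d2 = (x - p1) * (x - p2)"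
    by blast
  have "\<forall>x. Gb b1 b2 b3 b4 x = (x - r0) * (x - r0) * (x - (r0 + p1)) * (x - (r0 + p2))"
  proof
    fix x
    have "Gb b1 b2 b3 b4 x = Gb b1 b2 b3 b4 (r0 + (x - r0))" by simp
    also have "\<dots> = (x - r0)^2 * ((x - r0)^2 - 4/3 * (d1 + d2) * (x - r0) + 2 * d1 * d2)" by (rule sh)
    also have "\<dots> = (x - r0)^2 * ((x - r0 - p1) * (x - r0 - p2))" using pq[rule_format, of "x - r0"] by simp
    also have "\<dots> = (x - r0) * (x - r0) * (x - (r0 + p1)) * (x - (r0 + p2))" by (simp add: power2_eq_square algebra_simps)
    finally show "Gb b1 b2 b3 b4 x = (x - r0) * (x - r0) * (x - (r0 + p1)) * (x - (r0 + p2))" .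
  qed
  from fun_V4[OF this] show ?thesis by blast
next
  case False
  hence g0: "Gb b1 b2 b3 b4 r0 < 0" using s(1) by simp
  define d1 where "d1 = r1 - r0"
  define d2 where "d2 = r2 - r0"
  define R where "R = 1 - Gb b1 b2 b3 b4 r0"
  have R1: "R \<ge> 1" using g0 unfolding R_def by simp
  have "Gb b1 b2 b3 b4 (r0 - R) > 0"
  proof -
    have e1: "Gb b1 b2 b3 b4 (r0 - R) = Gb b1 b2 b3 b4 (r0 + (-R))" by simp
    have e2: "(-R)^4 - 4/3 * (d1 + d2) * (-R)^3 + 2 * d1 * d2 * (-R)^2 = R^4 + (4/3 * (d1 + d2) * R^3 + 2 * d1 * d2 * R^2)"
      by algebra
    have "Gb b1 b2 b3 b4 (r0 - R) = R^4 + (4/3 * (d1 + d2) * R^3 + 2 * d1 * d2 * R^2) + Gb b1 b2 b3 b4 r0"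
      unfolding e1 G_shift_r0[OF W, of b4 "-R"] e2[symmetric] d1_def d2_def by simp
    moreover have "4/3 * (d1 + d2) * R^3 + 2 * d1 * d2 * R^2 \<ge> 0"
      using p R1 unfolding d1_def d2_def by (intro add_nonneg_nonneg mult_nonneg_nonneg) auto
    moreover have "R^4 \<ge> R" using R1
      by (metis le_add_diff_inverse2 one_le_power power_one_right power_increasing zero_less_numeral
          less_imp_le_nat numeral_One numeral_le_iff semiring_norm(68) order.refl)
    moreover have "R + Gb b1 b2 b3 b4 r0 = 1" unfolding R_def by simp
    ultimately show ?thesis by linarith
  qed
  then obtain xa where xa: "r0 - R \<le> xa" "xa \<le> r0" "Gb b1 b2 b3 b4 xa = 0"
    using IVT2[of "\<lambda>x. Gb b1 b2 b3 b4 x" r0 0 "r0 - R"] g0 R1 G_cont by auto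
  have xa': "xa < r0" using xa g0 by (cases "xa = r0") auto
  obtain xb where xb: "r0 \<le> xb" "xb \<le> r1" "Gb b1 b2 b3 b4 xb = 0"
    using IVT[of "\<lambda>x. Gb b1 b2 b3 b4 x" r0 0 r1] g0 s(2) p G_cont by auto
  have xb': "r0 < xb" using xb g0 by (cases "xb = r0") auto
  define c2 where "c2 = b1 + xa"
  define c1 where "c1 = b2 + xa * c2"
  define c0 where "c0 = b3 + xa * c1"
  have dv1: "Gb b1 b2 b3 b4 x = (x - xa) * (x^3 + c2 * x^2 + c1 * x + c0) + Gb b1 b2 b3 b4 xa" for x
    unfolding c2_def c1_def c0_def Gb_def by algebra
  have "(xb - xa) * (xb^3 + c2 * xb^2 + c1 * xb + c0) = 0" using dv1[of xb] xb(3) xa(3) by simp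
  hence cb: "xb^3 + c2 * xb^2 + c1 * xb + c0 = 0" using xa' xb' by simp
  define q1 where "q1 = c2 + xb"
  define q0 where "q0 = c1 + xb * q1"
  have dv2: "x^3 + c2 * x^2 + c1 * x + c0 = (x - xb) * (x^2 + q1 * x + q0) + (xb^3 + c2 * xb^2 + c1 * xb + c0)" for x
    unfolding q1_def q0_def by algebra
  have fac: "Gb b1 b2 b3 b4 x = (x - xa) * (x - xb) * (x^2 + q1 * x + q0)" for x
    using dv1[of x] dv2[of x] cb xa(3) by simp
  have "r2^2 + q1 * r2 + q0 \<le> 0"
  proof (cases "r2 = xb")
    case False
    hence pos: "(r2 - xa) * (r2 - xb) > 0" using xa' xb p by (intro mult_pos_pos) auto
    have "(r2 - xa) * (r2 - xb) * (r2^2 + q1 * r2 + q0) \<le> 0" using fac[of r2] s(3) by simp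
    thus ?thesis using pos_le0[OF pos] by blast
  next
    case True
    have "\<forall>x. Gb b1 b2 b3 b4 x = Gb (q1 - xa - xb) (q0 - (xa + xb) * q1 + xa * xb)
        (- (xa + xb) * q0 + xa * xb * q1) (xa * xb * q0) x"
      using fac unfolding Gb_def by (simp add: algebra_simps power2_eq_square power3_eq_cube power4_eq_xxxx)
    from coeff_eq4[OF this] have bb: "b1 = q1 - xa - xb" "b2 = q0 - (xa + xb) * q1 + xa * xb"
      "b3 = - (xa + xb) * q0 + xa * xb * q1" by auto
    have "G1b b1 b2 b3 xb = (xb - xa) * (xb^2 + q1 * xb + q0)"
      unfolding G1b_def bb by algebra
    moreover have "G1b b1 b2 b3 xb = 0" using V3_G1[OF W, of xb] True by simp
    ultimately have "xb^2 + q1 * xb + q0 = 0" using xa' xb' by simp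
    thus ?thesis using True by simp
  qed
  from quad_split[OF this] obtain p1 p2 where pq: "\<forall>x. x^2 + q1 * x + q0 = (x - p1) * (x - p2)" by blast
  have "\<forall>x. Gb b1 b2 b3 b4 x = (x - xa) * (x - xb) * (x - p1) * (x - p2)"
    using fac pq by (simp add: mult.assoc)
  from fun_V4[OF this] show ?thesis by blast
qed

definition C3b :: "real \<Rightarrow> real \<Rightarrow> real" where "C3b b1 p = 4 * p + b1"
definition C2b :: "real \<Rightarrow> real \<Rightarrow> real \<Rightarrow> real" where "C2b b1 b2 p = 6 * p^2 + 3 * b1 * p + b2"

lemma G_taylor: "Gb b1 b2 b3 b4 (p + x) = x^4 + C3b b1 p * x^3 + C2b b1 b2 p * x^2 + G1b b1 b2 b3 p * x + Gb b1 b2 b3 b4 p"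
  unfolding Gb_def C3b_def C2b_def G1b_def by algebra

lemma V4_C3: "V4 b1 b2 b3 b4 t1 t2 t3 t4 \<Longrightarrow> C3b b1 p = (p-t1) + (p-t2) + (p-t3) + (p-t4)"
  unfolding V4_def C3b_def by algebra
lemma V4_C2: "V4 b1 b2 b3 b4 t1 t2 t3 t4 \<Longrightarrow> C2b b1 b2 p =
   (p-t1) * (p-t2) + (p-t1) * (p-t3) + (p-t1) * (p-t4) + (p-t2) * (p-t3) + (p-t2) * (p-t4) + (p-t3) * (p-t4)"
  unfolding V4_def C2b_def by algebra

definition "Tayl b1 b2 b3 b4 p \<longleftrightarrow> C3b b1 p \<ge> 0 \<and> C3b b1 (-p) \<le> 0 \<and> C2b b1 b2 p \<ge> 0 \<and> C2b b1 b2 (-p) \<ge> 0 \<and>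
   G1b b1 b2 b3 p \<ge> 0 \<and> G1b b1 b2 b3 (-p) \<le> 0 \<and> Gb b1 b2 b3 b4 p \<ge> 0 \<and> Gb b1 b2 b3 b4 (-p) \<ge> 0"

lemma interval_fwd:
  assumes V: "V4 b1 b2 b3 b4 t1 t2 t3 t4" and t: "\<forall>t\<in>{t1,t2,t3,t4}. -p \<le> t \<and> t \<le> p"
  shows "Tayl b1 b2 b3 b4 p"
proof -
  have d: "p - t1 \<ge> 0" "p - t2 \<ge> 0" "p - t3 \<ge> 0" "p - t4 \<ge> 0" using t by auto
  have e: "-p - t1 \<le> 0" "-p - t2 \<le> 0" "-p - t3 \<le> 0" "-p - t4 \<le> 0" using t by auto
  have 1: "C3b b1 p \<ge> 0" unfolding V4_C3[OF V] using d by simp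
  have 2: "C3b b1 (-p) \<le> 0" unfolding V4_C3[OF V] using e by simp
  have 3: "C2b b1 b2 p \<ge> 0" unfolding V4_C2[OF V] using d by (intro add_nonneg_nonneg mult_nonneg_nonneg) auto
  have 4: "C2b b1 b2 (-p) \<ge> 0" unfolding V4_C2[OF V] using e by (intro add_nonneg_nonneg mult_nonpos_nonpos) auto
  have 5: "G1b b1 b2 b3 p \<ge> 0" unfolding V4_G1[OF V] using d by (intro add_nonneg_nonneg mult_nonneg_nonneg) auto
  have 6: "G1b b1 b2 b3 (-p) \<le> 0" unfolding V4_G1[OF V] using e
    by (intro add_nonpos_nonpos mult_nonneg_nonpos mult_nonpos_nonpos) auto
  have 7: "Gb b1 b2 b3 b4 p \<ge> 0" unfolding V4_G[OF V] using d by (intro mult_nonneg_nonneg) auto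
  have 8: "Gb b1 b2 b3 b4 (-p) \<ge> 0" unfolding V4_G[OF V] using e
    by (intro mult_nonpos_nonpos mult_nonneg_nonpos mult_nonneg_nonneg) auto
  show ?thesis unfolding Tayl_def using 1 2 3 4 5 6 7 8 by blast
qed

lemma root_le:
  assumes T: "Tayl b1 b2 b3 b4 p" and r: "Gb b1 b2 b3 b4 t = 0"
  shows "-p \<le> t \<and> t \<le> p"
proof
  show "t \<le> p"
  proof (rule ccontr)
    assume "\<not> ?thesis" hence x: "t - p > 0" by simp
    have "Gb b1 b2 b3 b4 (p + (t - p)) > 0" unfolding G_taylor using T x unfolding Tayl_def
      by (intro add_pos_nonneg mult_nonneg_nonneg) auto
    thus False using r by simp
  qed
  show "-p \<le> t"
  proof (rule ccontr)
    assume "\<not> ?thesis" hence x: "-p - t > 0" by simp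
    have "Gb b1 b2 b3 b4 (-p + (-(-p - t))) = (-p-t)^4 + (- C3b b1 (-p)) * (-p-t)^3 + C2b b1 b2 (-p) * (-p-t)^2
       + (- G1b b1 b2 b3 (-p)) * (-p-t) + Gb b1 b2 b3 b4 (-p)"
      unfolding G_taylor by algebra
    also have "\<dots> > 0" using T x unfolding Tayl_def
      by (intro add_pos_nonneg mult_nonneg_nonneg) auto
    finally show False using r by simp
  qed
qed

lemma esym_zero:
  fixes d1 d2 d3 d4 :: real
  assumes "d1 \<ge> 0" "d2 \<ge> 0" "d3 \<ge> 0" "d4 \<ge> 0"
    and "d1 + d2 + d3 + d4 = 0 \<or> d1 * d2 + d1 * d3 + d1 * d4 + d2 * d3 + d2 * d4 + d3 * d4 = 0 \<or>
         d2 * d3 * d4 + d1 * d3 * d4 + d1 * d2 * d4 + d1 * d2 * d3 = 0"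
  shows "d1 * d2 * d3 * d4 = 0"
proof (rule ccontr)
  assume "\<not> ?thesis"
  hence p: "d1 > 0" "d2 > 0" "d3 > 0" "d4 > 0" using assms(1-4) by auto
  have "d1 + d2 + d3 + d4 > 0" "d1 * d2 + d1 * d3 + d1 * d4 + d2 * d3 + d2 * d4 + d3 * d4 > 0"
    "d2 * d3 * d4 + d1 * d3 * d4 + d1 * d2 * d4 + d1 * d2 * d3 > 0"
    using p by (intro add_pos_pos mult_pos_pos; simp)+
  thus False using assms(5) by auto
qed

lemma boundary_root:
  assumes V: "V4 b1 b2 b3 b4 t1 t2 t3 t4" and t: "\<forall>t\<in>{t1,t2,t3,t4}. -p \<le> t \<and> t \<le> p"
    and z: "C3b b1 p = 0 \<or> C3b b1 (-p) = 0 \<or> C2b b1 b2 p = 0 \<or> C2b b1 b2 (-p) = 0 \<or>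
       G1b b1 b2 b3 p = 0 \<or> G1b b1 b2 b3 (-p) = 0 \<or> Gb b1 b2 b3 b4 p = 0 \<or> Gb b1 b2 b3 b4 (-p) = 0"
  shows "Gb b1 b2 b3 b4 p = 0 \<or> Gb b1 b2 b3 b4 (-p) = 0"
proof -
  have d: "p - t1 \<ge> 0" "p - t2 \<ge> 0" "p - t3 \<ge> 0" "p - t4 \<ge> 0" using t by auto
  have e: "t1 + p \<ge> 0" "t2 + p \<ge> 0" "t3 + p \<ge> 0" "t4 + p \<ge> 0" using t by auto
  have gp: "Gb b1 b2 b3 b4 p = (p-t1) * (p-t2) * (p-t3) * (p-t4)" by (rule V4_G[OF V])
  have gm: "Gb b1 b2 b3 b4 (-p) = (t1+p) * (t2+p) * (t3+p) * (t4+p)" unfolding V4_G[OF V] by algebra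
  have c3m: "C3b b1 (-p) = - ((t1+p) + (t2+p) + (t3+p) + (t4+p))" unfolding V4_C3[OF V] by algebra
  have c2m: "C2b b1 b2 (-p) = (t1+p) * (t2+p) + (t1+p) * (t3+p) + (t1+p) * (t4+p) + (t2+p) * (t3+p) + (t2+p) * (t4+p) + (t3+p) * (t4+p)"
    unfolding V4_C2[OF V] by algebra
  have g1m: "G1b b1 b2 b3 (-p) = - ((t2+p) * (t3+p) * (t4+p) + (t1+p) * (t3+p) * (t4+p) + (t1+p) * (t2+p) * (t4+p) + (t1+p) * (t2+p) * (t3+p))"
    unfolding V4_G1[OF V] by algebra
  from z consider "C3b b1 p = 0 \<or> C2b b1 b2 p = 0 \<or> G1b b1 b2 b3 p = 0 \<or> Gb b1 b2 b3 b4 p = 0"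
    | "C3b b1 (-p) = 0 \<or> C2b b1 b2 (-p) = 0 \<or> G1b b1 b2 b3 (-p) = 0 \<or> Gb b1 b2 b3 b4 (-p) = 0" by blast
  thus ?thesis
  proof cases
    case 1
    hence "(p-t1) * (p-t2) * (p-t3) * (p-t4) = 0"
      using esym_zero[OF d] unfolding V4_C3[OF V] V4_C2[OF V] V4_G1[OF V] gp by blast
    thus ?thesis using gp by simp
  next
    case 2
    hence "(t1+p) * (t2+p) * (t3+p) * (t4+p) = 0"
      using esym_zero[OF e] unfolding c3m c2m g1m gm by auto
    thus ?thesis using gm by simp
  qed
qed

definition bq1 :: "int \<Rightarrow> real" where "bq1 a1 = real_of_int a1"
definition bq2 :: "nat \<Rightarrow> int \<Rightarrow> real" where "bq2 q a2 = real_of_int a2 - 4 * real q"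
definition bq3 :: "nat \<Rightarrow> int \<Rightarrow> int \<Rightarrow> real" where "bq3 q a1 a3 = real_of_int a3 - 3 * real q * real_of_int a1"
definition bq4 :: "nat \<Rightarrow> int \<Rightarrow> int \<Rightarrow> real" where
  "bq4 q a2 a4 = real_of_int a4 - 2 * real q * real_of_int a2 + 2 * real q ^ 2"

lemma u2_eq: "u2 q a1 a2 = U2b (bq1 a1) (bq2 q a2)"
  unfolding u2_def U2b_def bq1_def bq2_def by (simp add: field_simps)
lemma u3_eq: "u3 q a1 a2 a3 = U3b (bq1 a1) (bq2 q a2) (bq3 q a1 a3)"
  unfolding u3_def U3b_def bq1_def bq2_def bq3_def by (simp add: field_simps power3_eq_cube)
lemma Disc_eq: "Disc q a1 a2 a3 = Db (bq1 a1) (bq2 q a2) (bq3 q a1 a3)"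
  unfolding Disc_def Db_def u2_eq u3_eq ..

lemma cond_b_iff: "cond_b q a1 a2 \<longleftrightarrow> 3 * bq1 a1 ^ 2 - 8 * bq2 q a2 \<ge> 0"
  unfolding cond_b_def bq1_def bq2_def by auto

lemma V4_cond_b:
  assumes V: "V4 b1 b2 b3 b4 t1 t2 t3 t4" shows "3 * b1 ^ 2 - 8 * b2 \<ge> 0"
proof -
  have "3 * b1 ^ 2 - 8 * b2 = (t1-t2)^2 + (t1-t3)^2 + (t1-t4)^2 + (t2-t3)^2 + (t2-t4)^2 + (t3-t4)^2"
    using V unfolding V4_def by algebra
  also have "\<dots> \<ge> 0" by simp
  finally show ?thesis .
qed

lemma cond_d_iff:
  assumes b: "cond_b q a1 a2"
  shows "cond_d q a1 a2 a3 \<longleftrightarrow> Disc q a1 a2 a3 \<le> 0"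
proof -
  define X where "X = 9 * real_of_int a1 ^ 2 - real_of_int (24 * a2) + 96 * real q"
  define m where "m = 1/2 * real_of_int a1 * real_of_int a2 - 1/8 * real_of_int a1 ^ 3 + real q * real_of_int a1"
  have X0: "X \<ge> 0" using b unfolding cond_b_def X_def by simp
  define r where "r = 1/216 * X powr (3/2)"
  have r0: "r \<ge> 0" unfolding r_def by simp
  have r2: "r^2 = X^3 / 46656"
  proof -
    have "(X powr (3/2))^2 = X^3"
    proof (cases "X = 0")
      case True thus ?thesis by simp
    next
      case False
      hence Xp: "X > 0" using X0 by simp
      have "(X powr (3/2))^2 = X powr (of_nat 2 * (3/2))" using False by (rule powr_power)
      also have "\<dots> = X powr (real 3)" by simp
      also have "\<dots> = X^3" using Xp by (rule powr_realpow)
      finally show ?thesis .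
    qed
    thus ?thesis unfolding r_def by (simp add: power_divide)
  qed
  have dd: "cond_d q a1 a2 a3 \<longleftrightarrow> \<bar>real_of_int a3 - m\<bar> \<le> r"
  proof -
    have "cond_d q a1 a2 a3 \<longleftrightarrow> m - r \<le> real_of_int a3 \<and> real_of_int a3 \<le> m + r"
      by (simp only: cond_d_def Let_def m_def r_def X_def)
    thus ?thesis by (simp only: abs_le_iff) linarith
  qed
  have u2X: "u2 q a1 a2 = - X / 48" unfolding u2_def X_def by (simp add: field_simps)
  have u3m: "u3 q a1 a2 a3 = (m - real_of_int a3) / 4" unfolding u3_def m_def by (simp add: field_simps power3_eq_cube)
  have "Disc q a1 a2 a3 = ((real_of_int a3 - m)^2 - r^2) / 16"
    unfolding Disc_def u2X u3m r2 by (simp add: field_simps power2_eq_square power3_eq_cube)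
  hence "Disc q a1 a2 a3 \<le> 0 \<longleftrightarrow> (real_of_int a3 - m)^2 \<le> r^2"
    by (metis diff_ge_0_iff_ge divide_le_0_iff le_iff_diff_le_0 zero_less_numeral not_le order_less_imp_le)
  also have "\<dots> \<longleftrightarrow> \<bar>real_of_int a3 - m\<bar> \<le> r" using r0 by (simp add: abs_le_square_iff[symmetric])
  finally show ?thesis using dd by simp
qed

lemma Tayl_iff:
  fixes q :: nat and s :: real
  assumes hq: "real q = s^2" and s0: "s \<ge> 0" and sq: "sqrt (real q) = s"
  shows "Tayl (bq1 a1) (bq2 q a2) (bq3 q a1 a3) (bq4 q a2 a4) (2 * s) \<longleftrightarrow>
     cond_a q a1 \<and> cond_bstar q a1 a2 \<and> cond_c q a1 a2 a3 \<and> cond_e q a1 a2 a3 a4"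
proof -
  define A1 where "A1 = real_of_int a1"
  define A2 where "A2 = real_of_int a2"
  define A3 where "A3 = real_of_int a3"
  define A4 where "A4 = real_of_int a4"
  define Q where "Q = real q"
  have hQ: "Q = s^2" unfolding Q_def by (rule hq)
  have sqQ: "sqrt Q = s" unfolding Q_def by (rule sq)
  have i1: "C3b (bq1 a1) (2 * s) = 8 * s + A1" "C3b (bq1 a1) (-(2 * s)) = A1 - 8 * s"
    unfolding C3b_def bq1_def A1_def by simp_all
  have i2: "C2b (bq1 a1) (bq2 q a2) (2 * s) = 20 * Q + 6 * s * A1 + A2"
    "C2b (bq1 a1) (bq2 q a2) (-(2 * s)) = 20 * Q - 6 * s * A1 + A2"
    unfolding C2b_def bq1_def bq2_def A1_def[symmetric] A2_def[symmetric] Q_def[symmetric] hQ by algebra+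
  have i3: "G1b (bq1 a1) (bq2 q a2) (bq3 q a1 a3) (2 * s) = 16 * Q * s + 9 * Q * A1 + 4 * s * A2 + A3"
    "G1b (bq1 a1) (bq2 q a2) (bq3 q a1 a3) (-(2 * s)) = - 16 * Q * s + 9 * Q * A1 - 4 * s * A2 + A3"
    unfolding G1b_def bq1_def bq2_def bq3_def A1_def[symmetric] A2_def[symmetric] A3_def[symmetric]
      Q_def[symmetric] hQ by algebra+
  have i4: "Gb (bq1 a1) (bq2 q a2) (bq3 q a1 a3) (bq4 q a2 a4) (2 * s) = 2 * s * (Q * A1 + A3) + 2 * Q * A2 + 2 * Q^2 + A4"
    "Gb (bq1 a1) (bq2 q a2) (bq3 q a1 a3) (bq4 q a2 a4) (-(2 * s)) = - 2 * s * (Q * A1 + A3) + 2 * Q * A2 + 2 * Q^2 + A4"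
    unfolding Gb_def bq1_def bq2_def bq3_def bq4_def A1_def[symmetric] A2_def[symmetric] A3_def[symmetric]
      A4_def[symmetric] Q_def[symmetric] hQ by algebra+
  have ca: "cond_a q a1 \<longleftrightarrow> 8 * s + A1 \<ge> 0 \<and> A1 - 8 * s \<le> 0"
    unfolding cond_a_def sq A1_def[symmetric] by (auto simp: abs_le_iff)
  have cb: "cond_bstar q a1 a2 \<longleftrightarrow> 20 * Q + 6 * s * A1 + A2 \<ge> 0 \<and> 20 * Q - 6 * s * A1 + A2 \<ge> 0"
  proof -
    have "6 * s * \<bar>A1\<bar> = \<bar>6 * s * A1\<bar>" using s0 by (simp add: abs_mult)
    thus ?thesis unfolding cond_bstar_def sq sqQ A1_def[symmetric] A2_def[symmetric] Q_def[symmetric]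
      by (simp only: abs_le_iff) linarith
  qed
  have cc: "cond_c q a1 a2 a3 \<longleftrightarrow> 16 * Q * s + 9 * Q * A1 + 4 * s * A2 + A3 \<ge> 0 \<and>
      - 16 * Q * s + 9 * Q * A1 - 4 * s * A2 + A3 \<le> 0"
    unfolding cond_c_def sq sqQ A1_def[symmetric] A2_def[symmetric] A3_def[symmetric] Q_def[symmetric]
    by (auto simp: algebra_simps)
  have ce: "cond_e q a1 a2 a3 a4 \<longleftrightarrow> 2 * s * (Q * A1 + A3) + 2 * Q * A2 + 2 * Q^2 + A4 \<ge> 0 \<and>
      - 2 * s * (Q * A1 + A3) + 2 * Q * A2 + 2 * Q^2 + A4 \<ge> 0"
  proof -
    have "2 * s * \<bar>Q * A1 + A3\<bar> = \<bar>2 * s * (Q * A1 + A3)\<bar>" using s0 by (simp add: abs_mult)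
    thus ?thesis unfolding cond_e_def sq sqQ A1_def[symmetric] A2_def[symmetric] A3_def[symmetric]
      A4_def[symmetric] Q_def[symmetric]
      by (simp only: abs_le_iff) linarith
  qed
  show ?thesis unfolding Tayl_def i1 i2 i3 i4 ca cb cc ce by auto
qed

lemma prod4:
  fixes Q T1 T2 T3 T4 :: "'a::comm_ring_1"
  shows "[:Q, -T1, 1:] * ([:Q, -T2, 1:] * ([:Q, -T3, 1:] * ([:Q, -T4, 1:] * 1))) =
    [: (Q^4), (- (Q^3 * (T1+T2+T3+T4))), (Q^2 * (T1 * T2+T1 * T3+T1 * T4+T2 * T3+T2 * T4+T3 * T4 + 4 * Q)),
       (- (Q * (T1 * T2 * T3+T1 * T2 * T4+T1 * T3 * T4+T2 * T3 * T4 + 3 * Q * (T1+T2+T3+T4)))),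
       (T1 * T2 * T3 * T4 + 2 * Q * (T1 * T2+T1 * T3+T1 * T4+T2 * T3+T2 * T4+T3 * T4) + 6 * Q^2),
       (- (T1 * T2 * T3+T1 * T2 * T4+T1 * T3 * T4+T2 * T3 * T4 + 3 * Q * (T1+T2+T3+T4))),
       (T1 * T2+T1 * T3+T1 * T4+T2 * T3+T2 * T4+T3 * T4 + 4 * Q), (- (T1+T2+T3+T4)), 1 :]"
  by (simp add: algebra_simps power2_eq_square power3_eq_cube power4_eq_xxxx numeral_eq_Suc)

lemma hpoly_map:
  "map_poly (of_int :: int \<Rightarrow> 'a::comm_ring_1) (hpoly q a1 a2 a3 a4) =
    [: of_nat q ^ 4, of_int a1 * of_nat q ^ 3, of_int a2 * of_nat q ^ 2, of_int a3 * of_nat q, of_int a4,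
       of_int a3, of_int a2, of_int a1, 1 :]"
  by (simp add: hpoly_def map_poly_pCons)

lemma hpoly_deg: "degree (hpoly q a1 a2 a3 a4) = 8" "lead_coeff (hpoly q a1 a2 a3 a4) = 1"
  by (simp_all add: hpoly_def)

lemma quad_factor:
  fixes w :: complex
  assumes "norm w = sqrt (real q)"
  shows "[:-w, 1:] * [:-cnj w, 1:] = [:complex_of_real (real q), - complex_of_real (2 * Re w), 1:]"
proof -
  have "w * cnj w = complex_of_real (norm w ^ 2)" using complex_norm_square[of w] by simp
  also have "\<dots> = complex_of_real (real q)" using assms by simp
  finally have a: "w * cnj w = complex_of_real (real q)" .
  have b: "w + cnj w = complex_of_real (2 * Re w)" by (rule complex_add_cnj)
  show ?thesis using a b by (simp add: algebra_simps)
qed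

lemma W_to_t:
  assumes "hpoly q a1 a2 a3 a4 \<in> W q 4"
  shows "\<exists>t1 t2 t3 t4. V4 (bq1 a1) (bq2 q a2) (bq3 q a1 a3) (bq4 q a2 a4) t1 t2 t3 t4 \<and>
     (\<forall>t\<in>{t1,t2,t3,t4}. - (2 * sqrt (real q)) \<le> t \<and> t \<le> 2 * sqrt (real q))"
proof -
  from assms obtain ws :: "complex list" where ws: "length ws = 4" "\<forall>w\<in>set ws. cmod w = sqrt (real q)"
    "map_poly of_int (hpoly q a1 a2 a3 a4) = (\<Prod>w\<leftarrow>ws. [:- w, 1:] * [:- cnj w, 1:])"
    unfolding W_def weil_poly_def by auto
  from ws(1) obtain w1 w2 w3 w4 where wl: "ws = [w1, w2, w3, w4]"
    by (auto simp: length_Suc_conv numeral_eq_Suc)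
  define t1 where "t1 = 2 * Re w1"
  define t2 where "t2 = 2 * Re w2"
  define t3 where "t3 = 2 * Re w3"
  define t4 where "t4 = 2 * Re w4"
  have n: "cmod w1 = sqrt (real q)" "cmod w2 = sqrt (real q)" "cmod w3 = sqrt (real q)" "cmod w4 = sqrt (real q)"
    using ws(2) wl by auto
  have bnd: "\<bar>2 * Re w\<bar> \<le> 2 * sqrt (real q)" if "cmod w = sqrt (real q)" for w :: complex
    using abs_Re_le_cmod[of w] that by simp
  let ?Q = "of_nat q :: complex"
  have "map_poly of_int (hpoly q a1 a2 a3 a4) =
     [:?Q, - complex_of_real t1, 1:] * ([:?Q, - complex_of_real t2, 1:] * ([:?Q, - complex_of_real t3, 1:] *
       ([:?Q, - complex_of_real t4, 1:] * 1)))"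
    unfolding ws(3) wl t1_def t2_def t3_def t4_def using quad_factor[OF n(1)] quad_factor[OF n(2)]
      quad_factor[OF n(3)] quad_factor[OF n(4)] by (simp add: of_real_of_nat_eq)
  note eq = this[unfolded prod4 hpoly_map]
  hence e: "complex_of_int a1 = - (complex_of_real t1 + complex_of_real t2 + complex_of_real t3 + complex_of_real t4)"
    "complex_of_int a2 = complex_of_real t1 * complex_of_real t2 + complex_of_real t1 * complex_of_real t3
       + complex_of_real t1 * complex_of_real t4 + complex_of_real t2 * complex_of_real t3
       + complex_of_real t2 * complex_of_real t4 + complex_of_real t3 * complex_of_real t4 + 4 * ?Q"
    "complex_of_int a3 = - (complex_of_real t1 * complex_of_real t2 * complex_of_real t3
       + complex_of_real t1 * complex_of_real t2 * complex_of_real t4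
       + complex_of_real t1 * complex_of_real t3 * complex_of_real t4
       + complex_of_real t2 * complex_of_real t3 * complex_of_real t4
       + 3 * ?Q * (complex_of_real t1 + complex_of_real t2 + complex_of_real t3 + complex_of_real t4))"
    "complex_of_int a4 = complex_of_real t1 * complex_of_real t2 * complex_of_real t3 * complex_of_real t4
       + 2 * ?Q * (complex_of_real t1 * complex_of_real t2 + complex_of_real t1 * complex_of_real t3
       + complex_of_real t1 * complex_of_real t4 + complex_of_real t2 * complex_of_real t3
       + complex_of_real t2 * complex_of_real t4 + complex_of_real t3 * complex_of_real t4) + 6 * ?Q^2"
    by simp_all
  have r1: "real_of_int a1 = - (t1 + t2 + t3 + t4)" using arg_cong[OF e(1), of Re] by simp
  have r2: "real_of_int a2 = t1 * t2 + t1 * t3 + t1 * t4 + t2 * t3 + t2 * t4 + t3 * t4 + 4 * real q"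
    using arg_cong[OF e(2), of Re] by simp
  have r3: "real_of_int a3 = - (t1 * t2 * t3 + t1 * t2 * t4 + t1 * t3 * t4 + t2 * t3 * t4 + 3 * real q * (t1 + t2 + t3 + t4))"
    using arg_cong[OF e(3), of Re] by simp
  have r4: "real_of_int a4 = t1 * t2 * t3 * t4 + 2 * real q * (t1 * t2 + t1 * t3 + t1 * t4 + t2 * t3 + t2 * t4 + t3 * t4) + 6 * real q ^ 2"
    using arg_cong[OF e(4), of Re] by simp
  have V: "V4 (bq1 a1) (bq2 q a2) (bq3 q a1 a3) (bq4 q a2 a4) t1 t2 t3 t4"
    unfolding V4_def bq1_def bq2_def bq3_def bq4_def r1 r2 r3 r4 by algebra
  have "\<forall>t\<in>{t1,t2,t3,t4}. - (2 * sqrt (real q)) \<le> t \<and> t \<le> 2 * sqrt (real q)"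
    using bnd[OF n(1)] bnd[OF n(2)] bnd[OF n(3)] bnd[OF n(4)] unfolding t1_def t2_def t3_def t4_def
    by (auto simp: abs_le_iff)
  with V show ?thesis by blast
qed

definition w_of :: "nat \<Rightarrow> real \<Rightarrow> complex" where
  "w_of q t = Complex (t/2) (sqrt (real q - (t/2)^2))"

lemma w_of_props:
  assumes "- (2 * sqrt (real q)) \<le> t" "t \<le> 2 * sqrt (real q)"
  shows "cmod (w_of q t) = sqrt (real q)" "2 * Re (w_of q t) = t"
proof -
  have "\<bar>t\<bar> \<le> 2 * sqrt (real q)" using assms by simp
  hence "t^2 \<le> (2 * sqrt (real q))^2" using abs_le_square_iff[of t "2 * sqrt (real q)"] by simp
  hence "(t/2)^2 \<le> real q" by (simp add: power_divide power_mult_distrib)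
  hence "real q - (t/2)^2 \<ge> 0" by simp
  thus "cmod (w_of q t) = sqrt (real q)" unfolding w_of_def cmod_def by simp
  show "2 * Re (w_of q t) = t" unfolding w_of_def by simp
qed

lemma t_to_W:
  assumes V: "V4 (bq1 a1) (bq2 q a2) (bq3 q a1 a3) (bq4 q a2 a4) t1 t2 t3 t4"
    and bnd: "\<forall>t\<in>{t1,t2,t3,t4}. - (2 * sqrt (real q)) \<le> t \<and> t \<le> 2 * sqrt (real q)"
  shows "hpoly q a1 a2 a3 a4 \<in> W q 4"
proof -
  have r1: "real_of_int a1 = - (t1 + t2 + t3 + t4)" using V unfolding V4_def bq1_def by simp
  have r2: "real_of_int a2 = t1 * t2 + t1 * t3 + t1 * t4 + t2 * t3 + t2 * t4 + t3 * t4 + 4 * real q"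
    using V unfolding V4_def bq2_def by simp
  have r3: "real_of_int a3 = - (t1 * t2 * t3 + t1 * t2 * t4 + t1 * t3 * t4 + t2 * t3 * t4 + 3 * real q * (t1 + t2 + t3 + t4))"
    using V r1 unfolding V4_def bq3_def by (simp add: algebra_simps)
  have r4: "real_of_int a4 = t1 * t2 * t3 * t4 + 2 * real q * (t1 * t2 + t1 * t3 + t1 * t4 + t2 * t3 + t2 * t4 + t3 * t4) + 6 * real q ^ 2"
    using V r2 unfolding V4_def bq4_def by (simp add: algebra_simps power2_eq_square)
  have c: "complex_of_int a = complex_of_real (real_of_int a)" for a by simp
  have cq: "(of_nat q :: complex) = complex_of_real (real q)" by simp
  define ws where "ws = [w_of q t1, w_of q t2, w_of q t3, w_of q t4]"
  have p: "cmod (w_of q t) = sqrt (real q)" "2 * Re (w_of q t) = t" if "t \<in> {t1,t2,t3,t4}" for t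
    using w_of_props[of q t] bnd that by auto
  have "(\<Prod>w\<leftarrow>ws. [:- w, 1:] * [:- cnj w, 1:]) =
     [:complex_of_real (real q), - complex_of_real t1, 1:] * ([:complex_of_real (real q), - complex_of_real t2, 1:] *
      ([:complex_of_real (real q), - complex_of_real t3, 1:] * ([:complex_of_real (real q), - complex_of_real t4, 1:] * 1)))"
    unfolding ws_def using quad_factor[OF p(1)] p(2) by simp
  also have "\<dots> = map_poly of_int (hpoly q a1 a2 a3 a4)"
    unfolding prod4 hpoly_map c cq r1 r2 r3 r4 by (simp add: algebra_simps)
  finally have "map_poly of_int (hpoly q a1 a2 a3 a4) = (\<Prod>w\<leftarrow>ws. [:- w, 1:] * [:- cnj w, 1:])" ..
  moreover have "length ws = 4" "\<forall>w\<in>set ws. cmod w = sqrt (real q)" unfolding ws_def using p(1) by auto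
  ultimately show ?thesis unfolding W_def weil_poly_def using hpoly_deg by auto
qed

definition CF :: "real \<Rightarrow> real \<Rightarrow> real \<Rightarrow> bool" where
  "CF g0 g1 g2 \<longleftrightarrow> (0 \<le> g0 \<or> 0 \<le> g1 \<or> 0 \<le> g2) \<and> ((g0 \<le> 0 \<and> g1 \<le> 0) \<or> (g0 \<le> 0 \<and> g2 \<le> 0) \<or> (g1 \<le> 0 \<and> g2 \<le> 0))"

abbreviation "Gq q a1 a2 a3 a4 \<equiv> Gb (bq1 a1) (bq2 q a2) (bq3 q a1 a3) (bq4 q a2 a4)"

lemma G_depress: "Gb b1 b2 b3 b4 (y - b1/4) = y^4 + 2 * U2b b1 b2 * y^2 - 4 * U3b b1 b2 b3 * y + Gb b1 b2 b3 b4 (- b1/4)"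
  unfolding Gb_def U2b_def U3b_def by (simp add: field_simps power2_eq_square power3_eq_cube power4_eq_xxxx)

lemma c_plus: fixes a1 a2 a3 a4 :: int and q :: nat shows "3/256 * real_of_int a1 ^ 4 - 1/16 * real_of_int a1 ^ 2 * real_of_int a2 - 1/2 * real q * real_of_int (a1 ^ 2)
             + 1/4 * real_of_int a1 * real_of_int a3 + 2 * real q * real_of_int a2 - 2 * real q ^ 2
     + Gq q a1 a2 a3 a4 (- bq1 a1 / 4) = real_of_int a4"
  unfolding Gb_def bq1_def bq2_def bq3_def bq4_def by (simp add: field_simps power2_eq_square power3_eq_cube power4_eq_xxxx)

lemma condf_link:
  assumes D: "Disc q a1 a2 a3 \<le> 0" and adm: "admissible q a1 a2 a3 \<zeta> sD om"
  shows "cond_f q a1 a2 a3 a4 \<zeta> sD om \<longleftrightarrow>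
      CF (Gq q a1 a2 a3 a4 (yv \<zeta> om 0 - bq1 a1 / 4)) (Gq q a1 a2 a3 a4 (yv \<zeta> om 1 - bq1 a1 / 4))
         (Gq q a1 a2 a3 a4 (yv \<zeta> om 2 - bq1 a1 / 4))"
    and "V3 (bq1 a1) (bq2 q a2) (bq3 q a1 a3) (yv \<zeta> om 0 - bq1 a1 / 4) (yv \<zeta> om 1 - bq1 a1 / 4) (yv \<zeta> om 2 - bq1 a1 / 4)"
    and "S_elem q a1 a2 a3 \<zeta> sD om k \<in> \<real>"
proof -
  define c where "c = 3/256 * real_of_int a1 ^ 4 - 1/16 * real_of_int a1 ^ 2 * real_of_int a2 - 1/2 * real q * real_of_int (a1 ^ 2)
             + 1/4 * real_of_int a1 * real_of_int a3 + 2 * real q * real_of_int a2 - 2 * real q ^ 2"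
  have ReS: "Re (S_elem q a1 a2 a3 \<zeta> sD om k) = real_of_int a4 - c - Gq q a1 a2 a3 a4 (yv \<zeta> om k - bq1 a1 / 4)" for k
  proof -
    have "Re (S_elem q a1 a2 a3 \<zeta> sD om k) = -(yv \<zeta> om k ^ 4 + 2 * u2 q a1 a2 * yv \<zeta> om k ^ 2 - 4 * u3 q a1 a2 a3 * yv \<zeta> om k)"
      unfolding S_identify[OF D adm] by simp
    also have "\<dots> = Gq q a1 a2 a3 a4 (- bq1 a1 / 4) - Gq q a1 a2 a3 a4 (yv \<zeta> om k - bq1 a1 / 4)"
      unfolding G_depress u2_eq u3_eq by simp
    finally show ?thesis using c_plus[of a1 a2 q a3 a4] unfolding c_def by linarith
  qed
  show "S_elem q a1 a2 a3 \<zeta> sD om k \<in> \<real>" unfolding S_identify[OF D adm] by simp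
  have th: "thetas q a1 a2 a3 \<zeta> sD om = sort [Re (S_elem q a1 a2 a3 \<zeta> sD om 0), Re (S_elem q a1 a2 a3 \<zeta> sD om 1),
      Re (S_elem q a1 a2 a3 \<zeta> sD om 2)]" unfolding thetas_def by simp
  have cf: "cond_f q a1 a2 a3 a4 \<zeta> sD om \<longleftrightarrow> thetas q a1 a2 a3 \<zeta> sD om ! 0 \<le> real_of_int a4 - c \<and>
     real_of_int a4 - c \<le> thetas q a1 a2 a3 \<zeta> sD om ! 1"
    unfolding cond_f_def Let_def c_def by linarith
  show "cond_f q a1 a2 a3 a4 \<zeta> sD om \<longleftrightarrow>
      CF (Gq q a1 a2 a3 a4 (yv \<zeta> om 0 - bq1 a1 / 4)) (Gq q a1 a2 a3 a4 (yv \<zeta> om 1 - bq1 a1 / 4))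
         (Gq q a1 a2 a3 a4 (yv \<zeta> om 2 - bq1 a1 / 4))"
    unfolding cf th sort3 ReS CF_def by auto
  note yv = yv_vieta[OF D adm]
  show "V3 (bq1 a1) (bq2 q a2) (bq3 q a1 a3) (yv \<zeta> om 0 - bq1 a1 / 4) (yv \<zeta> om 1 - bq1 a1 / 4) (yv \<zeta> om 2 - bq1 a1 / 4)"
  proof -
    have e: "yv \<zeta> om 0 + yv \<zeta> om 1 + yv \<zeta> om 2 = 0"
      "yv \<zeta> om 0 * yv \<zeta> om 1 + yv \<zeta> om 0 * yv \<zeta> om 2 + yv \<zeta> om 1 * yv \<zeta> om 2 = U2b (bq1 a1) (bq2 q a2)"
      "yv \<zeta> om 0 * yv \<zeta> om 1 * yv \<zeta> om 2 = U3b (bq1 a1) (bq2 q a2) (bq3 q a1 a3)"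
      using yv unfolding u2_eq u3_eq by auto
    show ?thesis using e unfolding V3_def U2b_def U3b_def by algebra
  qed
qed

lemma sym3_reduce:
  fixes P :: "real \<Rightarrow> real \<Rightarrow> real \<Rightarrow> bool"
  assumes s12: "\<And>x y z. P x y z \<Longrightarrow> P y x z" and s23: "\<And>x y z. P x y z \<Longrightarrow> P x z y"
    and srt: "\<And>x y z. x \<le> y \<Longrightarrow> y \<le> z \<Longrightarrow> P x y z"
  shows "P a b c"
proof -
  consider "a \<le> b" "b \<le> c" | "a \<le> c" "c \<le> b" | "b \<le> a" "a \<le> c" | "b \<le> c" "c \<le> a"
    | "c \<le> a" "a \<le> b" | "c \<le> b" "b \<le> a" by linarith
  thus ?thesis
  proof cases
    case 1 thus ?thesis by (rule srt)
  next
    case 2 thus ?thesis using srt[of a c b] s23 by blast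
  next
    case 3 thus ?thesis using srt[of b a c] s12 by blast
  next
    case 4 thus ?thesis using srt[of b c a] s12 s23 by blast
  next
    case 5 thus ?thesis using srt[of c a b] s12 s23 by blast
  next
    case 6 thus ?thesis using srt[of c b a] s12 s23 by blast
  qed
qed

lemma V3_s12: "V3 b1 b2 b3 x y z \<Longrightarrow> V3 b1 b2 b3 y x z" unfolding V3_def by (simp add: algebra_simps)
lemma V3_s23: "V3 b1 b2 b3 x y z \<Longrightarrow> V3 b1 b2 b3 x z y" unfolding V3_def by (simp add: algebra_simps)
lemma CF_s12: "CF x y z \<Longrightarrow> CF y x z" unfolding CF_def by auto
lemma CF_s23: "CF x y z \<Longrightarrow> CF x z y" unfolding CF_def by auto

lemma CF_fwd:
  assumes V: "V4 b1 b2 b3 b4 t1 t2 t3 t4" and W: "V3 b1 b2 b3 r0 r1 r2"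
  shows "CF (Gb b1 b2 b3 b4 r0) (Gb b1 b2 b3 b4 r1) (Gb b1 b2 b3 b4 r2)"
proof -
  obtain s1 s2 s3 s4 where s: "s1 \<le> s2" "s2 \<le> s3" "s3 \<le> s4" "V4 b1 b2 b3 b4 s1 s2 s3 s4"
    using V4_sort[OF V] by blast
  have "V3 b1 b2 b3 r0 r1 r2 \<longrightarrow> CF (Gb b1 b2 b3 b4 r0) (Gb b1 b2 b3 b4 r1) (Gb b1 b2 b3 b4 r2)"
  proof (rule sym3_reduce[where P = "\<lambda>x y z. V3 b1 b2 b3 x y z \<longrightarrow> CF (Gb b1 b2 b3 b4 x) (Gb b1 b2 b3 b4 y) (Gb b1 b2 b3 b4 z)"])
    fix x y z assume "V3 b1 b2 b3 x y z \<longrightarrow> CF (Gb b1 b2 b3 b4 x) (Gb b1 b2 b3 b4 y) (Gb b1 b2 b3 b4 z)"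
    thus "V3 b1 b2 b3 y x z \<longrightarrow> CF (Gb b1 b2 b3 b4 y) (Gb b1 b2 b3 b4 x) (Gb b1 b2 b3 b4 z)"
      "V3 b1 b2 b3 x z y \<longrightarrow> CF (Gb b1 b2 b3 b4 x) (Gb b1 b2 b3 b4 z) (Gb b1 b2 b3 b4 y)"
      using V3_s12[of b1 b2 b3 y x z] V3_s23[of b1 b2 b3 x z y]
        CF_s12[of "Gb b1 b2 b3 b4 x" "Gb b1 b2 b3 b4 y" "Gb b1 b2 b3 b4 z"]
        CF_s23[of "Gb b1 b2 b3 b4 x" "Gb b1 b2 b3 b4 y" "Gb b1 b2 b3 b4 z"] by blast+
  next
    fix x y z :: real assume "x \<le> y" "y \<le> z"
    thus "V3 b1 b2 b3 x y z \<longrightarrow> CF (Gb b1 b2 b3 b4 x) (Gb b1 b2 b3 b4 y) (Gb b1 b2 b3 b4 z)"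
      using crit_signs_sorted[OF s(4) s(1-3)] unfolding CF_def by blast
  qed
  with W show ?thesis by blast
qed

lemma G_mono1:
  assumes W: "V3 b1 b2 b3 s0 s1 s2"
  shows "Gb b1 b2 b3 b4 s1 - Gb b1 b2 b3 b4 s0 = (s1 - s0)^3 * (2 * s2 - s0 - s1) / 3"
    and "Gb b1 b2 b3 b4 s1 - Gb b1 b2 b3 b4 s2 = (s2 - s1)^3 * (s1 + s2 - 2 * s0) / 3"
proof -
  have b: "b1 = -4/3 * (s0+s1+s2)" "b2 = 2 * (s0 * s1 + s0 * s2 + s1 * s2)" "b3 = -4 * (s0 * s1 * s2)"
    using W unfolding V3_def by linarith+
  show "Gb b1 b2 b3 b4 s1 - Gb b1 b2 b3 b4 s0 = (s1 - s0)^3 * (2 * s2 - s0 - s1) / 3"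
    unfolding Gb_def b by (simp add: field_simps power2_eq_square power3_eq_cube power4_eq_xxxx)
  show "Gb b1 b2 b3 b4 s1 - Gb b1 b2 b3 b4 s2 = (s2 - s1)^3 * (s1 + s2 - 2 * s0) / 3"
    unfolding Gb_def b by (simp add: field_simps power2_eq_square power3_eq_cube power4_eq_xxxx)
qed

lemma CF_bwd:
  assumes W: "V3 b1 b2 b3 r0 r1 r2" and C: "CF (Gb b1 b2 b3 b4 r0) (Gb b1 b2 b3 b4 r1) (Gb b1 b2 b3 b4 r2)"
  shows "\<exists>t1 t2 t3 t4. V4 b1 b2 b3 b4 t1 t2 t3 t4"
proof -
  have "V3 b1 b2 b3 r0 r1 r2 \<longrightarrow> CF (Gb b1 b2 b3 b4 r0) (Gb b1 b2 b3 b4 r1) (Gb b1 b2 b3 b4 r2) \<longrightarrow>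
      (\<exists>t1 t2 t3 t4. V4 b1 b2 b3 b4 t1 t2 t3 t4)"
  proof (rule sym3_reduce[where P = "\<lambda>x y z. V3 b1 b2 b3 x y z \<longrightarrow> CF (Gb b1 b2 b3 b4 x) (Gb b1 b2 b3 b4 y) (Gb b1 b2 b3 b4 z)
       \<longrightarrow> (\<exists>t1 t2 t3 t4. V4 b1 b2 b3 b4 t1 t2 t3 t4)"])
    fix x y z assume "V3 b1 b2 b3 x y z \<longrightarrow> CF (Gb b1 b2 b3 b4 x) (Gb b1 b2 b3 b4 y) (Gb b1 b2 b3 b4 z)
       \<longrightarrow> (\<exists>t1 t2 t3 t4. V4 b1 b2 b3 b4 t1 t2 t3 t4)"
    thus "V3 b1 b2 b3 y x z \<longrightarrow> CF (Gb b1 b2 b3 b4 y) (Gb b1 b2 b3 b4 x) (Gb b1 b2 b3 b4 z)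
       \<longrightarrow> (\<exists>t1 t2 t3 t4. V4 b1 b2 b3 b4 t1 t2 t3 t4)"
      "V3 b1 b2 b3 x z y \<longrightarrow> CF (Gb b1 b2 b3 b4 x) (Gb b1 b2 b3 b4 z) (Gb b1 b2 b3 b4 y)
       \<longrightarrow> (\<exists>t1 t2 t3 t4. V4 b1 b2 b3 b4 t1 t2 t3 t4)"
      using V3_s12[of b1 b2 b3 y x z] V3_s23[of b1 b2 b3 x z y]
        CF_s12[of "Gb b1 b2 b3 b4 y" "Gb b1 b2 b3 b4 x" "Gb b1 b2 b3 b4 z"]
        CF_s23[of "Gb b1 b2 b3 b4 x" "Gb b1 b2 b3 b4 z" "Gb b1 b2 b3 b4 y"] by blast+
  next
    fix x y z :: real assume o: "x \<le> y" "y \<le> z"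
    show "V3 b1 b2 b3 x y z \<longrightarrow> CF (Gb b1 b2 b3 b4 x) (Gb b1 b2 b3 b4 y) (Gb b1 b2 b3 b4 z)
       \<longrightarrow> (\<exists>t1 t2 t3 t4. V4 b1 b2 b3 b4 t1 t2 t3 t4)"
    proof (intro impI)
      assume W': "V3 b1 b2 b3 x y z" and C': "CF (Gb b1 b2 b3 b4 x) (Gb b1 b2 b3 b4 y) (Gb b1 b2 b3 b4 z)"
      have m1: "(y - x)^3 * (2 * z - x - y) / 3 \<ge> 0" using o by (intro divide_nonneg_pos mult_nonneg_nonneg) auto
      have m2: "(z - y)^3 * (y + z - 2 * x) / 3 \<ge> 0" using o by (intro divide_nonneg_pos mult_nonneg_nonneg) auto
      have g: "Gb b1 b2 b3 b4 y \<ge> Gb b1 b2 b3 b4 x" "Gb b1 b2 b3 b4 y \<ge> Gb b1 b2 b3 b4 z"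
        using G_mono1[OF W', of b4] m1 m2 by linarith+
      have "Gb b1 b2 b3 b4 x \<le> 0" "Gb b1 b2 b3 b4 y \<ge> 0" "Gb b1 b2 b3 b4 z \<le> 0"
        using C' g unfolding CF_def by linarith+
      from hyper_sorted[OF W' o this] show "\<exists>t1 t2 t3 t4. V4 b1 b2 b3 b4 t1 t2 t3 t4" .
    qed
  qed
  with W C show ?thesis by blast
qed

lemma cube_root_ex: "\<exists>w::complex. w ^ 3 = z"
proof (cases "z = 0")
  case True thus ?thesis by (intro exI[of _ 0]) simp
next
  case False
  have "exp (Ln z / 3) ^ 3 = exp (of_nat 3 * (Ln z / 3))" by (rule exp_of_nat_mult[symmetric])
  also have "\<dots> = z" using False by simp
  finally show ?thesis by blast
qed

lemma adm_exists: "\<exists>\<zeta> sD om. admissible q a1 a2 a3 \<zeta> sD om"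
proof -
  define \<zeta> where "\<zeta> = Complex (-1/2) (sqrt 3 / 2)"
  have s: "sqrt 3 * sqrt 3 = (3::real)" by simp
  have z: "\<zeta> ^ 3 = 1" "\<zeta> \<noteq> 1" unfolding \<zeta>_def by (simp_all add: power3_eq_cube complex_eq_iff field_simps s)
  define sD where "sD = csqrt (complex_of_real (Disc q a1 a2 a3))"
  have "sD ^ 2 = complex_of_real (Disc q a1 a2 a3)" unfolding sD_def by simp
  moreover obtain om where "om ^ 3 = (- complex_of_real (u3 q a1 a2 a3) + sD) / 2" using cube_root_ex by blast
  ultimately show ?thesis using z unfolding admissible_def by blast
qed

lemma W_Disc:
  assumes "hpoly q a1 a2 a3 a4 \<in> W q 4"
  shows "Disc q a1 a2 a3 \<le> 0"
proof -
  from W_to_t[OF assms] obtain t1 t2 t3 t4 where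
    "V4 (bq1 a1) (bq2 q a2) (bq3 q a1 a3) (bq4 q a2 a4) t1 t2 t3 t4" by blast
  from disc_neg[OF this] show ?thesis unfolding Disc_eq .
qed

lemma part1:
  assumes "hpoly q a1 a2 a3 a4 \<in> W q 4 \<or> (cond_a q a1 \<and> cond_bstar q a1 a2 \<and> cond_b q a1 a2 \<and>
                      cond_c q a1 a2 a3 \<and> cond_d q a1 a2 a3)"
  shows "\<forall>\<zeta> sD om. admissible q a1 a2 a3 \<zeta> sD om \<longrightarrow>
           (\<forall>k\<in>{0, 1, 2}. S_elem q a1 a2 a3 \<zeta> sD om k \<in> \<real>)"
proof -
  have D: "Disc q a1 a2 a3 \<le> 0"
    using assms W_Disc cond_d_iff by blast
  show ?thesis using condf_link(3)[OF D] by blast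
qed

lemma part2:
  assumes q0: "q > 0"
  shows "hpoly q a1 a2 a3 a4 \<in> W q 4 \<longleftrightarrow>
          (cond_a q a1 \<and> cond_bstar q a1 a2 \<and> cond_b q a1 a2 \<and> cond_c q a1 a2 a3 \<and>
           cond_d q a1 a2 a3 \<and> cond_e q a1 a2 a3 a4 \<and>
           (\<forall>\<zeta> sD om. admissible q a1 a2 a3 \<zeta> sD om \<longrightarrow> cond_f q a1 a2 a3 a4 \<zeta> sD om))"
proof -
  define s where "s = sqrt (real q)"
  have s0: "s \<ge> 0" and hq: "real q = s^2" and sq: "sqrt (real q) = s" unfolding s_def by simp_all
  note TI = Tayl_iff[OF hq s0 sq, of a1 a2 a3 a4]
  show ?thesis
  proof
    assume Wh: "hpoly q a1 a2 a3 a4 \<in> W q 4"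
    from W_to_t[OF Wh] obtain t1 t2 t3 t4 where V: "V4 (bq1 a1) (bq2 q a2) (bq3 q a1 a3) (bq4 q a2 a4) t1 t2 t3 t4"
      and bnd: "\<forall>t\<in>{t1,t2,t3,t4}. - (2 * s) \<le> t \<and> t \<le> 2 * s" unfolding s_def by blast
    have T: "cond_a q a1 \<and> cond_bstar q a1 a2 \<and> cond_c q a1 a2 a3 \<and> cond_e q a1 a2 a3 a4"
      using interval_fwd[OF V bnd] TI by blast
    have b: "cond_b q a1 a2" using V4_cond_b[OF V] cond_b_iff by blast
    have D: "Disc q a1 a2 a3 \<le> 0" using disc_neg[OF V] unfolding Disc_eq .
    have d: "cond_d q a1 a2 a3" using cond_d_iff[OF b] D by blast
    have f: "cond_f q a1 a2 a3 a4 \<zeta> sD om" if adm: "admissible q a1 a2 a3 \<zeta> sD om" for \<zeta> sD om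
      using condf_link(1)[OF D adm, of a4] CF_fwd[OF V condf_link(2)[OF D adm]] by blast
    show "cond_a q a1 \<and> cond_bstar q a1 a2 \<and> cond_b q a1 a2 \<and> cond_c q a1 a2 a3 \<and>
           cond_d q a1 a2 a3 \<and> cond_e q a1 a2 a3 a4 \<and>
           (\<forall>\<zeta> sD om. admissible q a1 a2 a3 \<zeta> sD om \<longrightarrow> cond_f q a1 a2 a3 a4 \<zeta> sD om)"
      using T b d f by blast
  next
    assume C: "cond_a q a1 \<and> cond_bstar q a1 a2 \<and> cond_b q a1 a2 \<and> cond_c q a1 a2 a3 \<and>
           cond_d q a1 a2 a3 \<and> cond_e q a1 a2 a3 a4 \<and>
           (\<forall>\<zeta> sD om. admissible q a1 a2 a3 \<zeta> sD om \<longrightarrow> cond_f q a1 a2 a3 a4 \<zeta> sD om)"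
    have D: "Disc q a1 a2 a3 \<le> 0" using C cond_d_iff by blast
    obtain \<zeta> sD om where adm: "admissible q a1 a2 a3 \<zeta> sD om" using adm_exists by blast
    have "cond_f q a1 a2 a3 a4 \<zeta> sD om" using C adm by blast
    hence cf: "CF (Gq q a1 a2 a3 a4 (yv \<zeta> om 0 - bq1 a1 / 4)) (Gq q a1 a2 a3 a4 (yv \<zeta> om 1 - bq1 a1 / 4))
         (Gq q a1 a2 a3 a4 (yv \<zeta> om 2 - bq1 a1 / 4))" using condf_link(1)[OF D adm] by blast
    from CF_bwd[OF condf_link(2)[OF D adm] cf] obtain t1 t2 t3 t4 where
      V: "V4 (bq1 a1) (bq2 q a2) (bq3 q a1 a3) (bq4 q a2 a4) t1 t2 t3 t4" by blast
    have T: "Tayl (bq1 a1) (bq2 q a2) (bq3 q a1 a3) (bq4 q a2 a4) (2 * s)" using C TI by blast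
    have "\<forall>t\<in>{t1,t2,t3,t4}. - (2 * sqrt (real q)) \<le> t \<and> t \<le> 2 * sqrt (real q)"
    proof
      fix t assume "t \<in> {t1,t2,t3,t4}"
      hence "Gq q a1 a2 a3 a4 t = 0" unfolding V4_G[OF V] by auto
      from root_le[OF T this] show "- (2 * sqrt (real q)) \<le> t \<and> t \<le> 2 * sqrt (real q)" unfolding sq .
    qed
    from t_to_W[OF V this] show "hpoly q a1 a2 a3 a4 \<in> W q 4" .
  qed
qed

lemma h_eval:
  fixes x :: real
  assumes "x \<noteq> 0"
  shows "poly (map_poly of_int (hpoly q a1 a2 a3 a4)) x = x^4 * Gq q a1 a2 a3 a4 (x + real q / x)"
  unfolding hpoly_map using assms
  by (simp add: Gb_def bq1_def bq2_def bq3_def bq4_def field_simps power2_eq_square power3_eq_cube power4_eq_xxxx)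

lemma h_eval0: "poly (map_poly of_int (hpoly q a1 a2 a3 a4)) (0::real) = real q ^ 4"
  unfolding hpoly_map by simp

lemma tvals:
  fixes q :: nat and s :: real
  assumes hq: "real q = s^2"
  shows "C3b (bq1 a1) (2 * s) = 8 * s + real_of_int a1" "C3b (bq1 a1) (-(2 * s)) = real_of_int a1 - 8 * s"
   "C2b (bq1 a1) (bq2 q a2) (2 * s) = 20 * real q + 6 * s * real_of_int a1 + real_of_int a2"
   "C2b (bq1 a1) (bq2 q a2) (-(2 * s)) = 20 * real q - 6 * s * real_of_int a1 + real_of_int a2"
   "G1b (bq1 a1) (bq2 q a2) (bq3 q a1 a3) (2 * s) = 16 * real q * s + 9 * real q * real_of_int a1 + 4 * s * real_of_int a2 + real_of_int a3"
   "G1b (bq1 a1) (bq2 q a2) (bq3 q a1 a3) (-(2 * s)) = - 16 * real q * s + 9 * real q * real_of_int a1 - 4 * s * real_of_int a2 + real_of_int a3"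
   "Gq q a1 a2 a3 a4 (2 * s) = 2 * s * (real q * real_of_int a1 + real_of_int a3) + 2 * real q * real_of_int a2 + 2 * real q^2 + real_of_int a4"
   "Gq q a1 a2 a3 a4 (-(2 * s)) = - 2 * s * (real q * real_of_int a1 + real_of_int a3) + 2 * real q * real_of_int a2 + 2 * real q^2 + real_of_int a4"
  unfolding C3b_def C2b_def G1b_def Gb_def bq1_def bq2_def bq3_def bq4_def hq by algebra+

lemma part3:
  fixes q :: nat and a1 a2 a3 a4 :: int
  assumes q0: "q > 0" and Wh: "hpoly q a1 a2 a3 a4 \<in> W q 4"
  shows "(\<exists>x::real. poly (map_poly of_int (hpoly q a1 a2 a3 a4)) x = 0) \<longleftrightarrow>
           (\<bar>real_of_int a1\<bar> = 8 * sqrt q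
            \<or> 6 * sqrt q * \<bar>real_of_int a1\<bar> - 20 * real q = real_of_int a2
            \<or> - 9 * real q * a1 - 4 * sqrt q * a2 - 16 * real q * sqrt q = real_of_int a3
            \<or> real_of_int a3 = - 9 * real q * a1 + 4 * sqrt q * a2 + 16 * real q * sqrt q
            \<or> 2 * sqrt q * \<bar>real q * a1 + a3\<bar> - 2 * real q * a2 - 2 * real q ^ 2 = real_of_int a4)"
proof -
  define s where "s = sqrt (real q)"
  have s0: "s > 0" using q0 unfolding s_def by simp
  have hq: "real q = s^2" unfolding s_def by simp
  note tv = tvals[OF hq]
  from W_to_t[OF Wh] obtain t1 t2 t3 t4 where V: "V4 (bq1 a1) (bq2 q a2) (bq3 q a1 a3) (bq4 q a2 a4) t1 t2 t3 t4"
      and bnd: "\<forall>t\<in>{t1,t2,t3,t4}. - (2 * s) \<le> t \<and> t \<le> 2 * s" unfolding s_def by blast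
  have T: "Tayl (bq1 a1) (bq2 q a2) (bq3 q a1 a3) (bq4 q a2 a4) (2 * s)" by (rule interval_fwd[OF V bnd])
  have Gp: "Gq q a1 a2 a3 a4 (2 * s) \<ge> 0" "Gq q a1 a2 a3 a4 (-(2 * s)) \<ge> 0" using T unfolding Tayl_def by auto
  have root_iff: "(\<exists>x::real. poly (map_poly of_int (hpoly q a1 a2 a3 a4)) x = 0) \<longleftrightarrow>
     (Gq q a1 a2 a3 a4 (2 * s) = 0 \<or> Gq q a1 a2 a3 a4 (-(2 * s)) = 0)"
  proof
    assume "\<exists>x::real. poly (map_poly of_int (hpoly q a1 a2 a3 a4)) x = 0"
    then obtain x :: real where x: "poly (map_poly of_int (hpoly q a1 a2 a3 a4)) x = 0" by blast
    have x0: "x \<noteq> 0" using x h_eval0[of q a1 a2 a3 a4] q0 by auto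
    define y where "y = x + real q / x"
    have "x^4 * Gq q a1 a2 a3 a4 y = 0" using x h_eval[OF x0] unfolding y_def by simp
    hence "Gq q a1 a2 a3 a4 y = 0" using x0 by simp
    hence "(y-t1) * (y-t2) * (y-t3) * (y-t4) = 0" unfolding V4_G[OF V] .
    hence "y \<in> {t1,t2,t3,t4}" by auto
    hence yb: "\<bar>y\<bar> \<le> 2 * s" using bnd by auto
    have "y^2 - 4 * real q = (x - real q / x)^2" unfolding y_def using x0
      by (simp add: field_simps power2_eq_square)
    moreover have "(x - real q / x)^2 \<ge> 0" by simp
    ultimately have "y^2 \<ge> 4 * real q" by linarith
    hence "y^2 \<ge> (2 * s)^2" using hq by (simp add: power_mult_distrib)
    moreover have "y^2 \<le> (2 * s)^2" using yb abs_le_square_iff[of y "2 * s"] s0 by simp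
    ultimately have "y^2 = (2 * s)^2" by simp
    hence "y = 2 * s \<or> y = -(2 * s)" using power2_eq_iff[of y "2 * s"] by blast
    moreover have "Gq q a1 a2 a3 a4 y = 0" by fact
    ultimately show "Gq q a1 a2 a3 a4 (2 * s) = 0 \<or> Gq q a1 a2 a3 a4 (-(2 * s)) = 0" by auto
  next
    assume "Gq q a1 a2 a3 a4 (2 * s) = 0 \<or> Gq q a1 a2 a3 a4 (-(2 * s)) = 0"
    moreover have "s + real q / s = 2 * s" "- s + real q / (- s) = -(2 * s)" using s0 hq
      by (simp_all add: field_simps power2_eq_square)
    ultimately have "poly (map_poly of_int (hpoly q a1 a2 a3 a4)) s = 0 \<or> poly (map_poly of_int (hpoly q a1 a2 a3 a4)) (-s) = 0"
      using h_eval[of s q] h_eval[of "-s" q] s0 by auto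
    thus "\<exists>x::real. poly (map_poly of_int (hpoly q a1 a2 a3 a4)) x = 0" by blast
  qed
  define E where "E = (\<bar>real_of_int a1\<bar> = 8 * sqrt q
            \<or> 6 * sqrt q * \<bar>real_of_int a1\<bar> - 20 * real q = real_of_int a2
            \<or> - 9 * real q * a1 - 4 * sqrt q * a2 - 16 * real q * sqrt q = real_of_int a3
            \<or> real_of_int a3 = - 9 * real q * a1 + 4 * sqrt q * a2 + 16 * real q * sqrt q
            \<or> 2 * sqrt q * \<bar>real q * a1 + a3\<bar> - 2 * real q * a2 - 2 * real q ^ 2 = real_of_int a4)"
  have E1: "E \<Longrightarrow> Gq q a1 a2 a3 a4 (2 * s) = 0 \<or> Gq q a1 a2 a3 a4 (-(2 * s)) = 0"
  proof -
    assume E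
    have "C3b (bq1 a1) (2 * s) = 0 \<or> C3b (bq1 a1) (-(2 * s)) = 0 \<or> C2b (bq1 a1) (bq2 q a2) (2 * s) = 0 \<or>
       C2b (bq1 a1) (bq2 q a2) (-(2 * s)) = 0 \<or> G1b (bq1 a1) (bq2 q a2) (bq3 q a1 a3) (2 * s) = 0 \<or>
       G1b (bq1 a1) (bq2 q a2) (bq3 q a1 a3) (-(2 * s)) = 0 \<or> Gq q a1 a2 a3 a4 (2 * s) = 0 \<or> Gq q a1 a2 a3 a4 (-(2 * s)) = 0"
    proof -
      have ab: "\<bar>z\<bar> = w \<Longrightarrow> z = w \<or> z = - w" for z w :: real by auto
      have m1: "6 * s * \<bar>real_of_int a1\<bar> = \<bar>6 * s * real_of_int a1\<bar>" using s0 by (simp add: abs_mult)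
      have m2: "2 * s * \<bar>real q * real_of_int a1 + real_of_int a3\<bar> = \<bar>2 * s * (real q * real_of_int a1 + real_of_int a3)\<bar>"
        using s0 by (simp add: abs_mult)
      define A1 where "A1 = real_of_int a1"
      define A2 where "A2 = real_of_int a2"
      define A3 where "A3 = real_of_int a3"
      define A4 where "A4 = real_of_int a4"
      define Q where "Q = real q"
      have E': "\<bar>A1\<bar> = 8 * s \<or> \<bar>6 * s * A1\<bar> = A2 + 20 * Q \<or> - 9 * (Q * A1) - 4 * (s * A2) - 16 * (Q * s) = A3
         \<or> A3 = - 9 * (Q * A1) + 4 * (s * A2) + 16 * (Q * s) \<or> \<bar>2 * s * (Q * A1 + A3)\<bar> = A4 + 2 * (Q * A2) + 2 * Q ^ 2"
      proof -
        have Es: "\<bar>A1\<bar> = 8 * s \<or> 6 * s * \<bar>A1\<bar> - 20 * Q = A2 \<or> - 9 * Q * A1 - 4 * s * A2 - 16 * Q * s = A3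
          \<or> A3 = - 9 * Q * A1 + 4 * s * A2 + 16 * Q * s \<or> 2 * s * \<bar>Q * A1 + A3\<bar> - 2 * Q * A2 - 2 * Q ^ 2 = A4"
          using \<open>E\<close> unfolding E_def A1_def A2_def A3_def A4_def Q_def s_def .
        have m1': "6 * s * \<bar>A1\<bar> = \<bar>6 * s * A1\<bar>" using s0 by (simp add: abs_mult)
        have m2': "2 * s * \<bar>Q * A1 + A3\<bar> = \<bar>2 * s * (Q * A1 + A3)\<bar>" using s0 by (simp add: abs_mult)
        from Es show ?thesis unfolding m1' m2' by (auto simp: algebra_simps)
      qed
      have goal: "8 * s + A1 = 0 \<or> A1 - 8 * s = 0 \<or> 20 * Q + 6 * s * A1 + A2 = 0 \<or> 20 * Q - 6 * s * A1 + A2 = 0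
        \<or> 16 * Q * s + 9 * Q * A1 + 4 * s * A2 + A3 = 0 \<or> - 16 * Q * s + 9 * Q * A1 - 4 * s * A2 + A3 = 0
        \<or> 2 * s * (Q * A1 + A3) + 2 * Q * A2 + 2 * Q^2 + A4 = 0 \<or> - 2 * s * (Q * A1 + A3) + 2 * Q * A2 + 2 * Q^2 + A4 = 0"
      proof -
        from E' consider (1) "\<bar>A1\<bar> = 8 * s" | (2) "\<bar>6 * s * A1\<bar> = A2 + 20 * Q"
          | (3) "- 9 * (Q * A1) - 4 * (s * A2) - 16 * (Q * s) = A3" | (4) "A3 = - 9 * (Q * A1) + 4 * (s * A2) + 16 * (Q * s)"
          | (5) "\<bar>2 * s * (Q * A1 + A3)\<bar> = A4 + 2 * (Q * A2) + 2 * Q ^ 2" by blast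
        thus ?thesis
        proof cases
          case 1 thus ?thesis using ab[OF 1] by auto
        next
          case 2 thus ?thesis using ab[OF 2] by (auto simp: algebra_simps)
        next
          case 3 thus ?thesis by (auto simp: algebra_simps)
        next
          case 4 thus ?thesis by (auto simp: algebra_simps)
        next
          case 5 thus ?thesis using ab[OF 5] by (auto simp: algebra_simps)
        qed
      qed
      thus ?thesis unfolding tv A1_def A2_def A3_def A4_def Q_def .
    qed
    from boundary_root[OF V bnd this] show ?thesis .
  qed
  have E2: "Gq q a1 a2 a3 a4 (2 * s) = 0 \<or> Gq q a1 a2 a3 a4 (-(2 * s)) = 0 \<Longrightarrow> E"
  proof -
    assume a: "Gq q a1 a2 a3 a4 (2 * s) = 0 \<or> Gq q a1 a2 a3 a4 (-(2 * s)) = 0"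
    define X where "X = real q * real_of_int a1 + real_of_int a3"
    have g: "2 * s * X + 2 * real q * real_of_int a2 + 2 * real q^2 + real_of_int a4 \<ge> 0"
      "- 2 * s * X + 2 * real q * real_of_int a2 + 2 * real q^2 + real_of_int a4 \<ge> 0"
      using Gp unfolding tv X_def by auto
    have a': "2 * s * X + 2 * real q * real_of_int a2 + 2 * real q^2 + real_of_int a4 = 0 \<or>
       - 2 * s * X + 2 * real q * real_of_int a2 + 2 * real q^2 + real_of_int a4 = 0"
      using a unfolding tv X_def by auto
    have m2: "2 * s * \<bar>X\<bar> = \<bar>2 * s * X\<bar>" using s0 by (simp add: abs_mult)
    define Y where "Y = 2 * s * X"
    have gY: "Y + 2 * real q * real_of_int a2 + 2 * real q^2 + real_of_int a4 \<ge> 0"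
      "- Y + 2 * real q * real_of_int a2 + 2 * real q^2 + real_of_int a4 \<ge> 0"
      using g unfolding Y_def by simp_all
    have aY: "Y + 2 * real q * real_of_int a2 + 2 * real q^2 + real_of_int a4 = 0 \<or>
       - Y + 2 * real q * real_of_int a2 + 2 * real q^2 + real_of_int a4 = 0"
      using a' unfolding Y_def by simp
    have "\<bar>Y\<bar> - 2 * real q * real_of_int a2 - 2 * real q ^ 2 = real_of_int a4"
      using aY gY by (auto simp: abs_if)
    hence "2 * s * \<bar>X\<bar> - 2 * real q * real_of_int a2 - 2 * real q ^ 2 = real_of_int a4"
      unfolding m2 Y_def .
    thus E unfolding E_def X_def s_def by simp
  qed
  show ?thesis using root_iff E1 E2 unfolding E_def[symmetric] by blast
qed

lemma map_of_int_mult: "map_poly (of_int :: int \<Rightarrow> 'a::comm_ring_1) (p * q) = map_poly of_int p * map_poly of_int q"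
  by (rule poly_eqI) (simp add: coeff_map_poly coeff_mult)

lemma map_of_int_power: "map_poly (of_int :: int \<Rightarrow> 'a::comm_ring_1) (p ^ n) = map_poly of_int p ^ n"
  by (induct n) (simp_all add: map_of_int_mult)

lemma poly_map_of_int_int: "poly (map_poly (of_int :: int \<Rightarrow> 'a::comm_ring_1) p) (of_int k) = of_int (poly p k)"
  by (induct p rule: pCons_induct) (simp_all add: map_poly_pCons)

lemma poly_map_of_int_real: "poly (map_poly (of_int :: int \<Rightarrow> complex) p) (complex_of_real x) =
    complex_of_real (poly (map_poly of_int p) x)"
  by (induct p rule: pCons_induct) (simp_all add: map_poly_pCons)

definition Fq :: "complex \<Rightarrow> complex poly" where "Fq w = [:- w, 1:] * [:- cnj w, 1:]"

lemma prod_remove1: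
  fixes f :: "'b \<Rightarrow> 'a::comm_monoid_mult"
  shows "x \<in> set xs \<Longrightarrow> prod_list (map f xs) = f x * prod_list (map f (remove1 x xs))"
  by (induct xs) (auto simp: mult.left_commute)

lemma root_of_prod:
  assumes "poly (\<Prod>w\<leftarrow>ws. Fq w) z = 0"
  shows "\<exists>w\<in>set ws. w = z \<or> cnj w = z"
proof -
  have "(\<Prod>w\<leftarrow>ws. poly (Fq w) z) = 0" using assms poly_prod_list[of "map Fq ws" z] by (simp add: o_def)
  then obtain w where "w \<in> set ws" "poly (Fq w) z = 0" by (auto simp: prod_list_zero_iff)
  moreover have "poly (Fq w) z = (z - w) * (z - cnj w)" unfolding Fq_def by (simp add: algebra_simps)
  ultimately show ?thesis by auto
qed

lemma real_root_in_ws: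
  fixes x :: real
  assumes "poly (\<Prod>w\<leftarrow>ws. Fq w) (complex_of_real x) = 0"
  shows "complex_of_real x \<in> set ws"
proof -
  from root_of_prod[OF assms] obtain w where w: "w \<in> set ws" "w = complex_of_real x \<or> cnj w = complex_of_real x" by blast
  hence "w = complex_of_real x" by (metis complex_cnj_cnj complex_cnj_complex_of_real)
  thus ?thesis using w by simp
qed

lemma Fq_real: "Fq (complex_of_real x) = [:- complex_of_real x, 1:] ^ 2"
  unfolding Fq_def by (simp add: power2_eq_square)

lemma pseudo_div_monic:
  fixes f g :: "int poly"
  assumes "lead_coeff g = 1"
  shows "\<exists>A R. f = g * A + R \<and> (R = 0 \<or> degree R < degree g)"
proof -
  have g0: "g \<noteq> 0" using assms by auto
  obtain A R where pd: "pseudo_divmod f g = (A, R)" by (cases "pseudo_divmod f g")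
  from pseudo_divmod(1)[OF g0 pd] have "f = g * A + R" using assms by simp
  moreover from pseudo_divmod(2)[OF g0 pd] have "R = 0 \<or> degree R < degree g" .
  ultimately show ?thesis by blast
qed

lemma sqrt_irr:
  fixes q :: nat and \<alpha> \<beta> :: int
  assumes nsq: "\<nexists>m::nat. q = m ^ 2" and e: "real_of_int \<alpha> * sqrt (real q) + real_of_int \<beta> = 0"
  shows "\<alpha> = 0 \<and> \<beta> = 0"
proof (cases "\<alpha> = 0")
  case True thus ?thesis using e by simp
next
  case False
  have sq: "sqrt (real q) = - real_of_int \<beta> / real_of_int \<alpha>" using e False by (simp add: field_simps)
  have "real q = sqrt (real q) ^ 2" by simp
  also have "\<dots> = (- real_of_int \<beta> / real_of_int \<alpha>) ^ 2" by (simp only: sq)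
  finally have "real q = real_of_int \<beta> ^ 2 / real_of_int \<alpha> ^ 2" by (simp add: power_divide)
  hence "real q * real_of_int \<alpha> ^ 2 = real_of_int \<beta> ^ 2" using False by (simp add: field_simps)
  hence "real_of_int (int q * \<alpha> ^ 2) = real_of_int (\<beta> ^ 2)" by simp
  hence eq: "int q * \<alpha> ^ 2 = \<beta> ^ 2" by (simp only: of_int_eq_iff)
  define a where "a = nat \<bar>\<alpha>\<bar>"
  define b where "b = nat \<bar>\<beta>\<bar>"
  have a0: "a > 0" using False unfolding a_def by simp
  have "int (q * a^2) = int (b^2)" unfolding a_def b_def using eq by (simp add: power2_abs)
  hence eqn: "q * a^2 = b^2" by (simp only: of_nat_eq_iff)
  hence "a^2 dvd b^2" by (metis dvd_triv_right)
  hence "a dvd b" by simp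
  then obtain k where k: "b = a * k" by blast
  hence "q * a^2 = a^2 * k^2" using eqn by (simp add: power_mult_distrib)
  hence "q = k^2" using a0 by simp
  with nsq show ?thesis by blast
qed

lemma map_of_int_add: "map_poly (of_int :: int \<Rightarrow> 'a::comm_ring_1) (p + q) = map_poly of_int p + map_poly of_int q"
  by (rule poly_eqI) (simp add: coeff_map_poly)

lemma canc: "(c::'a::idom) \<noteq> 0 \<Longrightarrow> c * a = c * b \<Longrightarrow> a = b" by simp

lemma W_deg:
  fixes h h0 d :: "int poly"
  assumes h: "h = d * h0" "degree h = 2 * g + 2 * k" "lead_coeff h = 1" and d: "degree d = 2 * k" "lead_coeff d = 1"
  shows "degree h0 = 2 * g" "lead_coeff h0 = 1"
proof -
  have h0: "h \<noteq> 0" using h(3) by auto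
  hence "h0 \<noteq> 0" "d \<noteq> 0" using h(1) by auto
  hence "degree h = degree d + degree h0" using h(1) by (simp add: degree_mult_eq)
  thus "degree h0 = 2 * g" using h(2) d(1) by simp
  have "lead_coeff h = lead_coeff d * lead_coeff h0" using h(1) by (simp add: lead_coeff_mult)
  thus "lead_coeff h0 = 1" using h(3) d(2) by simp
qed

lemma sq_case:
  fixes h :: "int poly" and k :: int
  assumes deg: "degree h = 8" "lead_coeff h = 1"
    and ws: "length ws = 4" "\<forall>w\<in>set ws. cmod w = sqrt (real q)" "map_poly of_int h = (\<Prod>w\<leftarrow>ws. Fq w)"
    and k: "of_int k \<in> set ws"
  shows "\<exists>h0. h0 \<in> W q 3 \<and> h = [:-k, 1:] ^ 2 * h0"
proof -
  define d where "d = [:-k, 1:]"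
  define rest where "rest = remove1 (of_int k) ws"
  have md: "map_poly (of_int :: int \<Rightarrow> complex) d = [:- of_int k, 1:]" unfolding d_def by (simp add: map_poly_pCons)
  have md0: "map_poly (of_int :: int \<Rightarrow> complex) d \<noteq> 0" unfolding md by simp
  have Fk: "Fq (of_int k) = [:- of_int k, 1:] * [:- of_int k, 1:]" unfolding Fq_def by simp
  have hC: "map_poly of_int h = map_poly of_int d * (map_poly of_int d * (\<Prod>w\<leftarrow>rest. Fq w))"
    unfolding ws(3) rest_def prod_remove1[OF k] Fk md by (simp only: mult.assoc)
  have "poly (map_poly (of_int :: int \<Rightarrow> complex) h) (of_int k) = 0" unfolding hC md by simp
  hence "poly h k = 0" unfolding poly_map_of_int_int by simp
  then obtain h1 where h1: "h = d * h1" unfolding d_def poly_eq_0_iff_dvd by (auto elim: dvdE)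
  have "map_poly of_int d * map_poly of_int h1 = map_poly of_int d * (map_poly of_int d * (\<Prod>w\<leftarrow>rest. Fq w))"
    using hC unfolding h1 map_of_int_mult .
  hence mh1: "map_poly (of_int :: int \<Rightarrow> complex) h1 = map_poly of_int d * (\<Prod>w\<leftarrow>rest. Fq w)" using md0 by simp
  have "poly (map_poly (of_int :: int \<Rightarrow> complex) h1) (of_int k) = 0" unfolding mh1 md by simp
  hence "poly h1 k = 0" unfolding poly_map_of_int_int by simp
  then obtain h0 where h0: "h1 = d * h0" unfolding d_def poly_eq_0_iff_dvd by (auto elim: dvdE)
  have "map_poly of_int d * map_poly of_int h0 = map_poly of_int d * (\<Prod>w\<leftarrow>rest. Fq w)"
    using mh1 unfolding h0 map_of_int_mult .
  hence mh0: "map_poly (of_int :: int \<Rightarrow> complex) h0 = (\<Prod>w\<leftarrow>rest. Fq w)" using md0 by simp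
  have hh: "h = d ^ 2 * h0" unfolding h1 h0 by (simp add: power2_eq_square mult.assoc)
  have dd: "degree (d ^ 2) = 2 * 1" "lead_coeff (d ^ 2) = 1"
    by (simp add: d_def degree_power_eq) (simp only: lead_coeff_power, simp add: d_def)
  note W = W_deg[OF hh _ deg(2) dd, of 3]
  have "length rest = 3" unfolding rest_def using ws(1) k by (simp add: length_remove1)
  moreover have "\<forall>w\<in>set rest. cmod w = sqrt (real q)" unfolding rest_def using ws(2) by (meson notin_set_remove1)
  ultimately have "h0 \<in> W q 3" unfolding W_def weil_poly_def using W deg mh0 unfolding Fq_def by auto
  thus ?thesis using hh unfolding d_def by blast
qed

lemma deg1_poly: "degree (R :: 'a::zero poly) < 2 \<Longrightarrow> R = [:coeff R 0, coeff R 1:]"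
  by (rule poly_eqI) (auto simp: coeff_pCons coeff_eq_0 split: nat.split)

lemma KP:
  fixes f :: "int poly" and x :: real
  assumes nsq: "\<nexists>m::nat. q = m ^ 2" and x: "x = sqrt (real q) \<or> x = - sqrt (real q)"
    and r: "poly (map_poly of_int f) x = 0"
  shows "\<exists>A. f = [:- int q, 0, 1:] * A"
proof -
  define P where "P = [:- int q, 0, 1:]"
  have lP: "lead_coeff P = 1" "degree P = 2" unfolding P_def by simp_all
  obtain A R where AR: "f = P * A + R" "R = 0 \<or> degree R < degree P" using pseudo_div_monic[OF lP(1)] by blast
  have x2: "x^2 = real q" using x by auto
  have "poly (map_poly (of_int :: int \<Rightarrow> real) P) x = 0" unfolding P_def using x2 by (simp add: map_poly_pCons power2_eq_square)
  hence "poly (map_poly (of_int :: int \<Rightarrow> real) R) x = 0" using r unfolding AR(1) map_of_int_add map_of_int_mult by simp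
  moreover have R1: "R = [:coeff R 0, coeff R 1:]" using AR(2) lP(2) deg1_poly[of R] by auto
  ultimately have "real_of_int (coeff R 0) + real_of_int (coeff R 1) * x = 0"
  proof -
    define c0 where "c0 = coeff R 0"
    define c1 where "c1 = coeff R 1"
    assume a: "poly (map_poly (of_int :: int \<Rightarrow> real) R) x = 0" "R = [:coeff R 0, coeff R 1:]"
    hence "poly (map_poly (of_int :: int \<Rightarrow> real) [:c0, c1:]) x = 0" unfolding c0_def c1_def by simp
    thus ?thesis unfolding c0_def[symmetric] c1_def[symmetric] by (simp add: map_poly_pCons mult.commute)
  qed
  hence "real_of_int (coeff R 1) * sqrt (real q) + real_of_int (coeff R 0) = 0 \<or>
         real_of_int (- coeff R 1) * sqrt (real q) + real_of_int (coeff R 0) = 0" using x by auto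
  hence "coeff R 0 = 0 \<and> coeff R 1 = 0" using sqrt_irr[OF nsq] by fastforce
  hence "R = 0" using R1 by simp
  thus ?thesis using AR(1) unfolding P_def by auto
qed

lemma nsq_case:
  fixes h :: "int poly" and x :: real
  assumes deg: "degree h = 8" "lead_coeff h = 1" and nsq: "\<nexists>m::nat. q = m ^ 2"
    and ws: "length ws = 4" "\<forall>w\<in>set ws. cmod w = sqrt (real q)" "map_poly of_int h = (\<Prod>w\<leftarrow>ws. Fq w)"
    and xw: "complex_of_real x \<in> set ws"
  shows "\<exists>h0. h0 \<in> W q 2 \<and> h = [:- int q, 0, 1:] ^ 2 * h0"
proof -
  define P where "P = [:- int q, 0, 1:]"
  have "cmod (complex_of_real x) = sqrt (real q)" using ws(2) xw by blast
  hence ax: "\<bar>x\<bar> = sqrt (real q)" by simp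
  hence xx: "x = sqrt (real q) \<or> x = - sqrt (real q)" by (auto simp: abs_if split: if_splits)
  have x2: "x^2 = real q" using xx by auto
  have q0: "q \<noteq> 0"
  proof
    assume "q = 0" hence "q = 0 ^ 2" by simp
    with nsq show False by blast
  qed
  have x0: "x \<noteq> 0" using ax q0 by auto
  define X where "X = complex_of_real x"
  have X0: "X \<noteq> 0" unfolding X_def using x0 by simp
  define rest where "rest = remove1 X ws"
  have mP: "map_poly (of_int :: int \<Rightarrow> complex) P = [:- X, 1:] * [:X, 1:]"
  proof -
    have "X * X = complex_of_real (x^2)" unfolding X_def by (simp add: power2_eq_square)
    also have "\<dots> = of_nat q" using x2 by simp
    finally have "X * X = of_nat q" .
    thus ?thesis unfolding P_def by (simp add: map_poly_pCons)
  qed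
  have FX: "Fq X = [:- X, 1:] * [:- X, 1:]" unfolding Fq_def X_def by simp
  have hC: "map_poly of_int h = [:- X, 1:] * ([:- X, 1:] * (\<Prod>w\<leftarrow>rest. Fq w))"
    unfolding ws(3) rest_def prod_remove1[OF xw[folded X_def]] FX by (simp only: mult.assoc)
  have "poly (map_poly (of_int :: int \<Rightarrow> complex) h) (complex_of_real x) = 0" unfolding hC X_def by simp
  hence "poly (map_poly of_int h) x = 0" unfolding poly_map_of_int_real by simp
  from KP[OF nsq xx this] obtain A where A: "h = P * A" unfolding P_def by blast
  have "[:- X, 1:] * ([:X, 1:] * map_poly of_int A) = map_poly of_int h"
    unfolding A map_of_int_mult mP by (simp only: mult.assoc)
  also have "\<dots> = [:- X, 1:] * ([:- X, 1:] * (\<Prod>w\<leftarrow>rest. Fq w))" by (rule hC)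
  finally have "[:- X, 1:] * ([:X, 1:] * map_poly of_int A) = [:- X, 1:] * ([:- X, 1:] * (\<Prod>w\<leftarrow>rest. Fq w))" .
  hence e1: "[:X, 1:] * map_poly of_int A = [:- X, 1:] * (\<Prod>w\<leftarrow>rest. Fq w)" by (rule canc[rotated]) simp
  have "poly ([:X, 1:] * map_poly (of_int :: int \<Rightarrow> complex) A) X = 0" unfolding e1 by simp
  hence "(2 * X) * poly (map_poly (of_int :: int \<Rightarrow> complex) A) X = 0" by (simp add: algebra_simps)
  hence "poly (map_poly (of_int :: int \<Rightarrow> complex) A) (complex_of_real x) = 0" using X0 unfolding X_def by simp
  hence "poly (map_poly of_int A) x = 0" unfolding poly_map_of_int_real by simp
  from KP[OF nsq xx this] obtain h0 where h0: "A = P * h0" unfolding P_def by blast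
  have hh: "h = P ^ 2 * h0" unfolding A h0 by (simp add: power2_eq_square mult.assoc)
  have "[:- X, 1:] * ([:X, 1:] * ([:X, 1:] * map_poly of_int h0)) = [:X, 1:] * map_poly of_int A"
    unfolding h0 map_of_int_mult mP by (simp only: ac_simps)
  also have "\<dots> = [:- X, 1:] * (\<Prod>w\<leftarrow>rest. Fq w)" by (rule e1)
  finally have "[:- X, 1:] * ([:X, 1:] * ([:X, 1:] * map_poly of_int h0)) = [:- X, 1:] * (\<Prod>w\<leftarrow>rest. Fq w)" .
  hence e2: "[:X, 1:] * ([:X, 1:] * map_poly of_int h0) = (\<Prod>w\<leftarrow>rest. Fq w)" by (rule canc[rotated]) simp
  have "poly (\<Prod>w\<leftarrow>rest. Fq w) (complex_of_real (-x)) = 0" unfolding e2[symmetric] X_def by simp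
  hence mx: "complex_of_real (-x) \<in> set rest" by (rule real_root_in_ws)
  define rest2 where "rest2 = remove1 (complex_of_real (-x)) rest"
  have Fm: "Fq (complex_of_real (-x)) = [:X, 1:] * [:X, 1:]" unfolding Fq_def X_def by simp
  have "[:X, 1:] * ([:X, 1:] * map_poly of_int h0) = [:X, 1:] * ([:X, 1:] * (\<Prod>w\<leftarrow>rest2. Fq w))"
    unfolding e2 rest2_def prod_remove1[OF mx] Fm by (simp only: mult.assoc)
  hence "[:X, 1:] * map_poly of_int h0 = [:X, 1:] * (\<Prod>w\<leftarrow>rest2. Fq w)" by (rule canc[rotated]) simp
  hence mh0: "map_poly of_int h0 = (\<Prod>w\<leftarrow>rest2. Fq w)" by (rule canc[rotated]) simp
  have dd: "degree (P ^ 2) = 2 * 2" "lead_coeff (P ^ 2) = 1"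
    by (simp add: P_def degree_power_eq) (simp only: lead_coeff_power, simp add: P_def)
  note W = W_deg[OF hh _ deg(2) dd, of 2]
  have lr: "length rest = 3" unfolding rest_def using ws(1) xw[folded X_def] by (simp add: length_remove1)
  have "length rest2 = 2" unfolding rest2_def using lr mx by (simp add: length_remove1)
  moreover have "\<forall>w\<in>set rest2. cmod w = sqrt (real q)" unfolding rest2_def rest_def using ws(2)
    by (meson notin_set_remove1)
  ultimately have "h0 \<in> W q 2" unfolding W_def weil_poly_def using W deg mh0 unfolding Fq_def by auto
  thus ?thesis using hh unfolding P_def by blast
qed

lemma W_ws:
  assumes "h \<in> W q g"
  shows "degree h = 2 * g \<and> lead_coeff h = 1 \<and> (\<exists>ws. length ws = g \<and> (\<forall>w\<in>set ws. cmod w = sqrt (real q)) \<and>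
     map_poly of_int h = (\<Prod>w\<leftarrow>ws. Fq w))"
  using assms unfolding W_def weil_poly_def Fq_def by auto

lemma ws_W:
  assumes "g > 0" "degree h = 2 * g" "lead_coeff h = 1" "length ws = g" "\<forall>w\<in>set ws. cmod w = sqrt (real q)"
     "map_poly of_int h = (\<Prod>w\<leftarrow>ws. Fq w)"
  shows "h \<in> W q g"
  using assms unfolding W_def weil_poly_def Fq_def by auto

lemma part4:
  fixes q :: nat and a1 a2 a3 a4 :: int
  assumes q0: "q > 0"
  defines "h \<equiv> hpoly q a1 a2 a3 a4"
  shows "(h \<in> W q 4 \<and> (\<exists>x::real. poly (map_poly of_int h) x = 0)) \<longleftrightarrow>
          ((\<exists>m::nat. q = m ^ 2 \<and> (\<exists>h0. h0 \<in> W q 3 \<and>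
                (h = [:int m, 1:] ^ 2 * h0 \<or> h = [:- int m, 1:] ^ 2 * h0)))
           \<or> ((\<nexists>m::nat. q = m ^ 2) \<and> (\<exists>h0. h0 \<in> W q 2 \<and> h = [:- int q, 0, 1:] ^ 2 * h0)))"
proof
  assume a: "h \<in> W q 4 \<and> (\<exists>x::real. poly (map_poly of_int h) x = 0)"
  then obtain x :: real where x: "poly (map_poly of_int h) x = 0" by blast
  from W_ws[OF conjunct1[OF a]] obtain ws where deg: "degree h = 8" "lead_coeff h = 1"
    and ws: "length ws = 4" "\<forall>w\<in>set ws. cmod w = sqrt (real q)" "map_poly of_int h = (\<Prod>w\<leftarrow>ws. Fq w)" by auto
  have "poly (map_poly (of_int :: int \<Rightarrow> complex) h) (complex_of_real x) = 0" unfolding poly_map_of_int_real x by simp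
  hence xw: "complex_of_real x \<in> set ws" unfolding ws(3) by (rule real_root_in_ws)
  hence ax: "\<bar>x\<bar> = sqrt (real q)" using ws(2) by fastforce
  show "(\<exists>m::nat. q = m ^ 2 \<and> (\<exists>h0. h0 \<in> W q 3 \<and>
                (h = [:int m, 1:] ^ 2 * h0 \<or> h = [:- int m, 1:] ^ 2 * h0)))
           \<or> ((\<nexists>m::nat. q = m ^ 2) \<and> (\<exists>h0. h0 \<in> W q 2 \<and> h = [:- int q, 0, 1:] ^ 2 * h0))"
  proof (cases "\<exists>m::nat. q = m ^ 2")
    case True
    then obtain m :: nat where m: "q = m ^ 2" by blast
    have "sqrt (real q) = real m" unfolding m by simp
    hence "x = real m \<or> x = - real m" using ax by (auto simp: abs_if split: if_splits)
    thus ?thesis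
    proof
      assume "x = real m"
      hence "complex_of_int (int m) \<in> set ws" using xw by simp
      from sq_case[OF deg ws this] m show ?thesis by blast
    next
      assume "x = - real m"
      hence "complex_of_int (- int m) \<in> set ws" using xw by simp
      from sq_case[OF deg ws this] m show ?thesis by auto
    qed
  next
    case False
    from nsq_case[OF deg False ws xw] False show ?thesis by blast
  qed
next
  assume "(\<exists>m::nat. q = m ^ 2 \<and> (\<exists>h0. h0 \<in> W q 3 \<and>
                (h = [:int m, 1:] ^ 2 * h0 \<or> h = [:- int m, 1:] ^ 2 * h0)))
           \<or> ((\<nexists>m::nat. q = m ^ 2) \<and> (\<exists>h0. h0 \<in> W q 2 \<and> h = [:- int q, 0, 1:] ^ 2 * h0))"
  thus "h \<in> W q 4 \<and> (\<exists>x::real. poly (map_poly of_int h) x = 0)"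
  proof
    assume "\<exists>m::nat. q = m ^ 2 \<and> (\<exists>h0. h0 \<in> W q 3 \<and> (h = [:int m, 1:] ^ 2 * h0 \<or> h = [:- int m, 1:] ^ 2 * h0))"
    then obtain m :: nat and h0 c where m: "q = m ^ 2" and h0: "h0 \<in> W q 3" and c: "c = int m \<or> c = - int m"
      and hc: "h = [:c, 1:] ^ 2 * h0" by blast
    from W_ws[OF h0] obtain ws0 where ws0: "length ws0 = 3" "\<forall>w\<in>set ws0. cmod w = sqrt (real q)"
      "map_poly of_int h0 = (\<Prod>w\<leftarrow>ws0. Fq w)" by auto
    define w where "w = complex_of_int (- c)"
    have nw: "cmod w = sqrt (real q)" unfolding w_def m using c by auto
    have Fw: "Fq w = map_poly of_int ([:c, 1:] ^ 2)" unfolding w_def Fq_def map_of_int_power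
      by (simp add: map_poly_pCons power2_eq_square)
    have "map_poly of_int h = (\<Prod>w\<leftarrow>w # ws0. Fq w)" unfolding hc map_of_int_mult ws0(3) Fw[symmetric] by simp
    moreover have "length (w # ws0) = 4" "\<forall>w\<in>set (w # ws0). cmod w = sqrt (real q)" using ws0 nw by auto
    ultimately have hW: "h \<in> W q 4" using ws_W[of 4 h "w # ws0" q] hpoly_deg unfolding h_def by simp
    have "poly h (- c) = 0" unfolding hc by simp
    hence "poly (map_poly (of_int :: int \<Rightarrow> real) h) (of_int (- c)) = 0" unfolding poly_map_of_int_int by simp
    with hW show ?thesis by blast
  next
    assume "(\<nexists>m::nat. q = m ^ 2) \<and> (\<exists>h0. h0 \<in> W q 2 \<and> h = [:- int q, 0, 1:] ^ 2 * h0)"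
    then obtain h0 where h0: "h0 \<in> W q 2" and hc: "h = [:- int q, 0, 1:] ^ 2 * h0" by blast
    from W_ws[OF h0] obtain ws0 where ws0: "length ws0 = 2" "\<forall>w\<in>set ws0. cmod w = sqrt (real q)"
      "map_poly of_int h0 = (\<Prod>w\<leftarrow>ws0. Fq w)" by auto
    define r where "r = sqrt (real q)"
    have r2: "r * r = real q" unfolding r_def by simp
    have R2: "complex_of_real r * complex_of_real r = of_nat q" using r2 by (metis of_real_mult of_real_of_nat_eq)
    have FF: "Fq (complex_of_real r) * Fq (complex_of_real (- r)) = map_poly of_int ([:- int q, 0, 1:] ^ 2)"
    proof -
      have "Fq (complex_of_real r) * Fq (complex_of_real (- r)) =
         ([:- complex_of_real r, 1:] * [:complex_of_real r, 1:]) ^ 2" unfolding Fq_def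
        by (simp add: power2_eq_square ac_simps)
      also have "[:- complex_of_real r, 1:] * [:complex_of_real r, 1:] = [:- of_nat q, 0, 1:]" using R2 by simp
      finally show ?thesis unfolding map_of_int_power by (simp add: map_poly_pCons)
    qed
    define ws1 where "ws1 = complex_of_real r # complex_of_real (- r) # ws0"
    have "map_poly of_int h = (\<Prod>w\<leftarrow>ws1. Fq w)"
      unfolding ws1_def hc map_of_int_mult ws0(3) FF[symmetric] by (simp only: list.map prod_list.Cons mult.assoc)
    moreover have "length ws1 = 4" "\<forall>w\<in>set ws1. cmod w = sqrt (real q)" using ws0 unfolding r_def ws1_def by auto
    ultimately have hW: "h \<in> W q 4" using ws_W[of 4 h ws1 q] hpoly_deg unfolding h_def by simp
    have "poly (map_poly (of_int :: int \<Rightarrow> real) [:- int q, 0, 1:]) r = 0" using r2 by (simp add: map_poly_pCons)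
    hence "poly (map_poly (of_int :: int \<Rightarrow> real) h) r = 0" unfolding hc map_of_int_mult map_of_int_power by simp
    with hW show ?thesis by blast
  qed
qed

theorem theoremB:
  fixes p n q :: nat and a1 a2 a3 a4 :: int
  assumes "prime p" and "n \<ge> 1" and "q = p ^ n"
  defines "h \<equiv> hpoly q a1 a2 a3 a4"
  shows
    "((h \<in> W q 4 \<or> (cond_a q a1 \<and> cond_bstar q a1 a2 \<and> cond_b q a1 a2 \<and>
                      cond_c q a1 a2 a3 \<and> cond_d q a1 a2 a3)) \<longrightarrow>
        (\<forall>\<zeta> sD om. admissible q a1 a2 a3 \<zeta> sD om \<longrightarrow>
           (\<forall>k\<in>{0, 1, 2}. S_elem q a1 a2 a3 \<zeta> sD om k \<in> \<real>)))
     \<and> (h \<in> W q 4 \<longleftrightarrow>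
          (cond_a q a1 \<and> cond_bstar q a1 a2 \<and> cond_b q a1 a2 \<and> cond_c q a1 a2 a3 \<and>
           cond_d q a1 a2 a3 \<and> cond_e q a1 a2 a3 a4 \<and>
           (\<forall>\<zeta> sD om. admissible q a1 a2 a3 \<zeta> sD om \<longrightarrow> cond_f q a1 a2 a3 a4 \<zeta> sD om)))
     \<and> (h \<in> W q 4 \<longrightarrow>
          ((\<exists>x::real. poly (map_poly of_int h) x = 0) \<longleftrightarrow>
           (\<bar>real_of_int a1\<bar> = 8 * sqrt q
            \<or> 6 * sqrt q * \<bar>real_of_int a1\<bar> - 20 * real q = real_of_int a2
            \<or> - 9 * real q * a1 - 4 * sqrt q * a2 - 16 * real q * sqrt q = real_of_int a3
            \<or> real_of_int a3 = - 9 * real q * a1 + 4 * sqrt q * a2 + 16 * real q * sqrt q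
            \<or> 2 * sqrt q * \<bar>real q * a1 + a3\<bar> - 2 * real q * a2 - 2 * real q ^ 2 = real_of_int a4)))
     \<and> ((h \<in> W q 4 \<and> (\<exists>x::real. poly (map_poly of_int h) x = 0)) \<longleftrightarrow>
          ((\<exists>m::nat. q = m ^ 2 \<and> (\<exists>h0. h0 \<in> W q 3 \<and>
                (h = [:int m, 1:] ^ 2 * h0 \<or> h = [:- int m, 1:] ^ 2 * h0)))
           \<or> ((\<nexists>m::nat. q = m ^ 2) \<and> (\<exists>h0. h0 \<in> W q 2 \<and> h = [:- int q, 0, 1:] ^ 2 * h0))))
     \<and> \<not> ((\<exists>m::nat. q = m ^ 2 \<and> (\<exists>h0. h0 \<in> W q 3 \<and>
                (h = [:int m, 1:] ^ 2 * h0 \<or> h = [:- int m, 1:] ^ 2 * h0)))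
           \<and> ((\<nexists>m::nat. q = m ^ 2) \<and> (\<exists>h0. h0 \<in> W q 2 \<and> h = [:- int q, 0, 1:] ^ 2 * h0)))"
proof -
  have q0: "q > 0" using assms(1,3) by (simp add: prime_gt_0_nat)
  have P1: "((h \<in> W q 4 \<or> (cond_a q a1 \<and> cond_bstar q a1 a2 \<and> cond_b q a1 a2 \<and>
                      cond_c q a1 a2 a3 \<and> cond_d q a1 a2 a3)) \<longrightarrow>
        (\<forall>\<zeta> sD om. admissible q a1 a2 a3 \<zeta> sD om \<longrightarrow>
           (\<forall>k\<in>{0, 1, 2}. S_elem q a1 a2 a3 \<zeta> sD om k \<in> \<real>)))"
    unfolding h_def using part1 by blast
  have P2: "(h \<in> W q 4 \<longleftrightarrow>
          (cond_a q a1 \<and> cond_bstar q a1 a2 \<and> cond_b q a1 a2 \<and> cond_c q a1 a2 a3 \<and>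
           cond_d q a1 a2 a3 \<and> cond_e q a1 a2 a3 a4 \<and>
           (\<forall>\<zeta> sD om. admissible q a1 a2 a3 \<zeta> sD om \<longrightarrow> cond_f q a1 a2 a3 a4 \<zeta> sD om)))"
    unfolding h_def by (rule part2[OF q0])
  have P3: "(h \<in> W q 4 \<longrightarrow>
          ((\<exists>x::real. poly (map_poly of_int h) x = 0) \<longleftrightarrow>
           (\<bar>real_of_int a1\<bar> = 8 * sqrt q
            \<or> 6 * sqrt q * \<bar>real_of_int a1\<bar> - 20 * real q = real_of_int a2
            \<or> - 9 * real q * a1 - 4 * sqrt q * a2 - 16 * real q * sqrt q = real_of_int a3
            \<or> real_of_int a3 = - 9 * real q * a1 + 4 * sqrt q * a2 + 16 * real q * sqrt q
            \<or> 2 * sqrt q * \<bar>real q * a1 + a3\<bar> - 2 * real q * a2 - 2 * real q ^ 2 = real_of_int a4)))"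
    unfolding h_def using part3[OF q0] by blast
  have P4: "((h \<in> W q 4 \<and> (\<exists>x::real. poly (map_poly of_int h) x = 0)) \<longleftrightarrow>
          ((\<exists>m::nat. q = m ^ 2 \<and> (\<exists>h0. h0 \<in> W q 3 \<and>
                (h = [:int m, 1:] ^ 2 * h0 \<or> h = [:- int m, 1:] ^ 2 * h0)))
           \<or> ((\<nexists>m::nat. q = m ^ 2) \<and> (\<exists>h0. h0 \<in> W q 2 \<and> h = [:- int q, 0, 1:] ^ 2 * h0))))"
    unfolding h_def by (rule part4[OF q0])
  have P5: "\<not> ((\<exists>m::nat. q = m ^ 2 \<and> (\<exists>h0. h0 \<in> W q 3 \<and>
                (h = [:int m, 1:] ^ 2 * h0 \<or> h = [:- int m, 1:] ^ 2 * h0)))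
           \<and> ((\<nexists>m::nat. q = m ^ 2) \<and> (\<exists>h0. h0 \<in> W q 2 \<and> h = [:- int q, 0, 1:] ^ 2 * h0)))"
    by blast
  show ?thesis using P1 P2 P3 P4 P5 by (intro conjI)
qed

end
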